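(* Let $\mathcal{B}$ be a $d$-dimensional manifold with a torsion-free flat connection $\nabla$ and $F\in C^\infty(\mathcal{B})$. Then $F$ satisfies the Rüssmann condition if and only if it satisfies the Resonant set with empty interior condition.
   Context: Frequency map: on a simply connected open set $\mathcal{O}$, $\varphi:\mathcal{O}\to\Omega^1_\nabla(\mathcal{O})$ sends $c$ to the parallel 1-form equal to $dF_c$ at $c$. For a parallel vector field $X$ on an open set $\mathcal{O}$, $\Omega_X=dF(X)$ and $\Sigma_X=\{c\in\mathcal{O}:\Omega_X(c)=0\}$. Rüssmann condition: for every simply connected open $\mathcal{O}\subset\mathcal{B}$ and every non-vanishing parallel vector field $X$ on $\mathcal{O}$, there is no nonempty open subset $U\subset\mathcal{O}$ with $\varphi(c)(X)=0$ for all $c\in U$ (in flat coordinates: the image of $\xi\mapsto(\partial F/\partial\xi_k)_k$ does not lie in a hyperplane through the origin on an open set). Resonant set with empty interior condition: for every open $\mathcal{O}$ and every non-vanishing parallel vector field $X$ on $\mathcal{O}$, $\Sigma_X$ has empty interior. *)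

theory Defs
  imports "HOL-Analysis.Analysis"
begin

text \<open>An affine (flat, torsion-free) structure on a manifold is encoded by an atlas of
charts (U, phi) into real^'n whose transition maps are locally affine. Tangent vectors,
covectors, parallel fields and dF are expressed in chart coordinates.\<close>

type_synonym ('a, 'n) chart = "'a set \<times> ('a \<Rightarrow> real^'n)"

definition chart_inv :: "('a, 'n) chart \<Rightarrow> real^'n \<Rightarrow> 'a" where
  "chart_inv c = inv_into (fst c) (snd c)"

definition transition :: "('a, 'n) chart \<Rightarrow> ('a, 'n) chart \<Rightarrow> real^'n \<Rightarrow> real^'n" where
  "transition c c' = snd c' \<circ> chart_inv c"

definition affine_atlas :: "('a::topological_space, 'n::finite) chart set \<Rightarrow> bool" where
  "affine_atlas A \<longleftrightarrow>
     \<Union>(fst ` A) = UNIV \<and>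
     (\<forall>c\<in>A. open (fst c) \<and> open (snd c ` fst c) \<and>
        homeomorphism (fst c) (snd c ` fst c) (snd c) (chart_inv c)) \<and>
     (\<forall>c\<in>A. \<forall>c'\<in>A. \<forall>x\<in>snd c ` (fst c \<inter> fst c'). \<exists>e>0. \<exists>L b. linear L \<and>
        (\<forall>y\<in>ball x e \<inter> snd c ` (fst c \<inter> fst c'). transition c c' y = L y + b))"

fun Ck_on :: "nat \<Rightarrow> 'b::real_normed_vector set \<Rightarrow> ('b \<Rightarrow> 'c::real_normed_vector) \<Rightarrow> bool" where
  "Ck_on 0 S f = continuous_on S f"
| "Ck_on (Suc k) S f = (f differentiable_on S \<and> continuous_on S f \<and>
      (\<forall>v. Ck_on k S (\<lambda>x. frechet_derivative f (at x) v)))"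

definition smooth_on_set :: "'b::real_normed_vector set \<Rightarrow> ('b \<Rightarrow> 'c::real_normed_vector) \<Rightarrow> bool" where
  "smooth_on_set S f \<longleftrightarrow> (\<forall>k. Ck_on k S f)"

definition smooth_fun :: "('a, 'n::finite) chart set \<Rightarrow> ('a \<Rightarrow> real) \<Rightarrow> bool" where
  "smooth_fun A F \<longleftrightarrow> (\<forall>c\<in>A. smooth_on_set (snd c ` fst c) (F \<circ> chart_inv c))"

definition dF :: "('a \<Rightarrow> real) \<Rightarrow> ('a, 'n::finite) chart \<Rightarrow> 'a \<Rightarrow> real^'n \<Rightarrow> real" where
  "dF F c p = frechet_derivative (F \<circ> chart_inv c) (at (snd c p))"

definition parallel_vf :: "('a::topological_space, 'n::finite) chart set \<Rightarrow> 'a set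
    \<Rightarrow> (('a, 'n) chart \<Rightarrow> 'a \<Rightarrow> real^'n) \<Rightarrow> bool" where
  "parallel_vf A Ob X \<longleftrightarrow>
     (\<forall>c\<in>A. \<forall>p\<in>Ob \<inter> fst c. \<exists>W. open W \<and> p \<in> W \<and> (\<forall>q\<in>W \<inter> Ob \<inter> fst c. X c q = X c p)) \<and>
     (\<forall>c\<in>A. \<forall>c'\<in>A. \<forall>p\<in>Ob \<inter> fst c \<inter> fst c'.
        X c' p = frechet_derivative (transition c c') (at (snd c p)) (X c p))"

definition nonvanishing_vf :: "('a, 'n::finite) chart set \<Rightarrow> 'a set
    \<Rightarrow> (('a, 'n) chart \<Rightarrow> 'a \<Rightarrow> real^'n) \<Rightarrow> bool" where
  "nonvanishing_vf A Ob X \<longleftrightarrow> (\<forall>c\<in>A. \<forall>p\<in>Ob \<inter> fst c. X c p \<noteq> 0)"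

text \<open>A parallel 1-form on Ob: in each chart a locally constant covector (represented via the
inner product), compatible with transitions; normalised to 0 outside its domain.\<close>
definition parallel_form :: "('a::topological_space, 'n::finite) chart set \<Rightarrow> 'a set
    \<Rightarrow> (('a, 'n) chart \<Rightarrow> 'a \<Rightarrow> real^'n) \<Rightarrow> bool" where
  "parallel_form A Ob \<omega> \<longleftrightarrow>
     (\<forall>c p. c \<notin> A \<or> p \<notin> Ob \<inter> fst c \<longrightarrow> \<omega> c p = 0) \<and>
     (\<forall>c\<in>A. \<forall>p\<in>Ob \<inter> fst c. \<exists>W. open W \<and> p \<in> W \<and> (\<forall>q\<in>W \<inter> Ob \<inter> fst c. \<omega> c q = \<omega> c p)) \<and>
     (\<forall>c\<in>A. \<forall>c'\<in>A. \<forall>p\<in>Ob \<inter> fst c \<inter> fst c'. \<forall>v.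
        \<omega> c p \<bullet> v = \<omega> c' p \<bullet> frechet_derivative (transition c c') (at (snd c p)) v)"

definition freq_map :: "('a::topological_space, 'n::finite) chart set \<Rightarrow> ('a \<Rightarrow> real) \<Rightarrow> 'a set
    \<Rightarrow> 'a \<Rightarrow> (('a, 'n) chart \<Rightarrow> 'a \<Rightarrow> real^'n)" where
  "freq_map A F Ob c = (THE \<omega>. parallel_form A Ob \<omega> \<and>
      (\<forall>k\<in>A. c \<in> fst k \<longrightarrow> (\<forall>v. \<omega> k c \<bullet> v = dF F k c v)))"

definition form_vf_zero :: "('a, 'n::finite) chart set \<Rightarrow> 'a set
    \<Rightarrow> (('a, 'n) chart \<Rightarrow> 'a \<Rightarrow> real^'n) \<Rightarrow> (('a, 'n) chart \<Rightarrow> 'a \<Rightarrow> real^'n) \<Rightarrow> bool" where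
  "form_vf_zero A Ob \<omega> X \<longleftrightarrow> (\<forall>k\<in>A. \<forall>p\<in>Ob \<inter> fst k. \<omega> k p \<bullet> X k p = 0)"

definition Omega_X :: "('a \<Rightarrow> real) \<Rightarrow> (('a, 'n::finite) chart \<Rightarrow> 'a \<Rightarrow> real^'n)
    \<Rightarrow> ('a, 'n) chart \<Rightarrow> 'a \<Rightarrow> real" where
  "Omega_X F X c p = dF F c p (X c p)"

definition Sigma_X :: "('a, 'n::finite) chart set \<Rightarrow> ('a \<Rightarrow> real) \<Rightarrow> 'a set
    \<Rightarrow> (('a, 'n) chart \<Rightarrow> 'a \<Rightarrow> real^'n) \<Rightarrow> 'a set" where
  "Sigma_X A F Ob X = {p \<in> Ob. \<forall>c\<in>A. p \<in> fst c \<longrightarrow> Omega_X F X c p = 0}"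

definition russmann :: "('a::topological_space, 'n::finite) chart set \<Rightarrow> ('a \<Rightarrow> real) \<Rightarrow> bool" where
  "russmann A F \<longleftrightarrow> (\<forall>Ob X. open Ob \<and> simply_connected Ob \<and> parallel_vf A Ob X \<and> nonvanishing_vf A Ob X
      \<longrightarrow> \<not> (\<exists>U. open U \<and> U \<noteq> {} \<and> U \<subseteq> Ob \<and> (\<forall>c\<in>U. form_vf_zero A Ob (freq_map A F Ob c) X)))"

definition resonant_empty_interior :: "('a::topological_space, 'n::finite) chart set \<Rightarrow> ('a \<Rightarrow> real) \<Rightarrow> bool" where
  "resonant_empty_interior A F \<longleftrightarrow> (\<forall>Ob X. open Ob \<and> parallel_vf A Ob X \<and> nonvanishing_vf A Ob X
      \<longrightarrow> interior (Sigma_X A F Ob X) = {})"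

end

theory Submission
  imports Defs
begin


lemma vec_eq_inner: fixes a b :: "real^'n::finite" assumes "\<And>v. a \<bullet> v = b \<bullet> v" shows "a = b"
proof -
  have "(a - b) \<bullet> (a - b) = 0" using assms[of "a-b"] by (simp add: inner_diff_left)
  then show ?thesis by simp
qed

lemma lin_inner_vec: fixes D :: "real^'n::finite \<Rightarrow> real" assumes "linear D"
  shows "(\<chi> i. D (axis i 1)) \<bullet> v = D v"
proof -
  have "D v = D (\<Sum>i\<in>UNIV. v $ i *s axis i 1)" by (simp add: basis_expansion)
  also have "\<dots> = (\<Sum>i\<in>UNIV. v $ i * D (axis i 1))"
    using assms by (simp add: linear_sum linear_scale scalar_mult_eq_scaleR)
  finally show ?thesis by (simp add: inner_vec_def mult.commute)
qed

locale AA =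
  fixes A :: "('a::topological_space, 'n::finite) chart set"
  assumes atlas: "affine_atlas A"
begin

lemma cover: "\<exists>k\<in>A. p \<in> fst k"
  using atlas unfolding affine_atlas_def by blast

lemma chart_open: "k\<in>A \<Longrightarrow> open (fst k)"
  using atlas unfolding affine_atlas_def by blast

lemma chart_img_open: "k\<in>A \<Longrightarrow> open (snd k ` fst k)"
  using atlas unfolding affine_atlas_def by blast

lemma chart_hom: "k\<in>A \<Longrightarrow> homeomorphism (fst k) (snd k ` fst k) (snd k) (chart_inv k)"
  using atlas unfolding affine_atlas_def by blast

lemma inv_snd: "k\<in>A \<Longrightarrow> p\<in>fst k \<Longrightarrow> chart_inv k (snd k p) = p"
  using chart_hom unfolding homeomorphism_def by blast

lemma snd_inv: "k\<in>A \<Longrightarrow> y \<in> snd k ` fst k \<Longrightarrow> snd k (chart_inv k y) = y \<and> chart_inv k y \<in> fst k"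
  using chart_hom unfolding homeomorphism_def by blast

lemma img_open: "k\<in>A \<Longrightarrow> open V \<Longrightarrow> V \<subseteq> fst k \<Longrightarrow> open (snd k ` V)"
  by (meson chart_hom chart_img_open homeomorphism_imp_open_map open_subset openin_open_trans)

lemma pre_open: "k\<in>A \<Longrightarrow> open Op \<Longrightarrow> open (fst k \<inter> snd k -` Op)"
proof -
  assume k: "k\<in>A" and O: "open Op"
  have "continuous_on (fst k) (snd k)" using chart_hom[OF k] homeomorphism_def by blast
  then have "open (snd k -` Op \<inter> fst k)" using continuous_on_open_vimage chart_open[OF k] O by blast
  then show ?thesis by (simp add: Int_commute)
qed

definition M where "M k k' q = frechet_derivative (transition k k') (at (snd k q))"

lemma trans_eq: "k\<in>A \<Longrightarrow> p \<in> fst k \<Longrightarrow> transition k k' (snd k p) = snd k' p"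
  by (simp add: transition_def inv_snd)

lemma M_loc:
  assumes k: "k\<in>A" and k': "k'\<in>A" and q: "q\<in>fst k" "q\<in>fst k'"
  shows "\<exists>N. open N \<and> q \<in> N \<and> N \<subseteq> fst k \<inter> fst k' \<and>
     (\<forall>q'\<in>N. (transition k k' has_derivative M k k' q) (at (snd k q')))"
proof -
  define G where "G = snd k ` (fst k \<inter> fst k')"
  have oG: "open G" unfolding G_def using img_open[OF k] chart_open[OF k] chart_open[OF k'] by blast
  have xG: "snd k q \<in> G" using q G_def by blast
  obtain e L b where e: "e > 0" and L: "linear L" and eq: "\<forall>y\<in>ball (snd k q) e \<inter> G. transition k k' y = L y + b"
    using atlas xG k k' unfolding affine_atlas_def G_def by blast
  define Op where "Op = ball (snd k q) e \<inter> G"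
  have oO: "open Op" using oG Op_def by blast
  have D: "(transition k k' has_derivative L) (at y)" if "y \<in> Op" for y
  proof -
    have "((\<lambda>y. L y + b) has_derivative L) (at y)"
      by (intro has_derivative_add_const linear_imp_has_derivative L)
    then show ?thesis
      by (rule has_derivative_transform_within_open[OF _ oO that]) (use eq Op_def in auto)
  qed
  have xO: "snd k q \<in> Op" using Op_def xG e by simp
  have Meq: "M k k' q = L" unfolding M_def using D[OF xO] frechet_derivative_at by metis
  define N where "N = fst k \<inter> snd k -` Op"
  have "N \<subseteq> fst k \<inter> fst k'"
  proof
    fix x assume "x \<in> N"
    then have x: "x \<in> fst k" "snd k x \<in> G" using N_def Op_def by auto
    then obtain p where p: "p \<in> fst k" "p \<in> fst k'" "snd k x = snd k p" using G_def by auto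
    then have "x = p" using inv_snd[OF k] x by metis
    then show "x \<in> fst k \<inter> fst k'" using p by simp
  qed
  moreover have "open N" using pre_open[OF k oO] N_def by simp
  moreover have "q \<in> N" using N_def xO q by simp
  moreover have "\<forall>q'\<in>N. (transition k k' has_derivative M k k' q) (at (snd k q'))"
    using D Meq N_def by auto
  ultimately show ?thesis by blast
qed

lemma M_const:
  assumes "k\<in>A" "k'\<in>A" "q\<in>fst k" "q\<in>fst k'"
  shows "\<exists>N. open N \<and> q \<in> N \<and> N \<subseteq> fst k \<inter> fst k' \<and> (\<forall>q'\<in>N. M k k' q' = M k k' q)"
proof -
  obtain N where N: "open N" "q \<in> N" "N \<subseteq> fst k \<inter> fst k'"
     "\<forall>q'\<in>N. (transition k k' has_derivative M k k' q) (at (snd k q'))"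
    using M_loc[OF assms] by blast
  have "\<forall>q'\<in>N. M k k' q' = M k k' q" using N(4) frechet_derivative_at unfolding M_def by metis
  then show ?thesis using N by blast
qed

lemma M_der:
  assumes "k\<in>A" "k'\<in>A" "q\<in>fst k" "q\<in>fst k'"
  shows "(transition k k' has_derivative M k k' q) (at (snd k q))"
  using M_loc[OF assms] by blast

lemma M_linear:
  assumes "k\<in>A" "k'\<in>A" "q\<in>fst k" "q\<in>fst k'"
  shows "linear (M k k' q)"
  using M_der[OF assms] has_derivative_linear by blast

lemma M_id:
  assumes k: "k\<in>A" and q: "q\<in>fst k"
  shows "M k k q = id"
proof -
  have "((\<lambda>y. y) has_derivative id) (at (snd k q))"
    by (simp add: has_derivative_ident id_def)
  then have "(transition k k has_derivative id) (at (snd k q))"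
    by (rule has_derivative_transform_within_open[OF _ chart_img_open[OF k]])
       (use q snd_inv[OF k] in \<open>auto simp: transition_def\<close>)
  then show ?thesis unfolding M_def using frechet_derivative_at by metis
qed

lemma M_co:
  assumes k: "k\<in>A" and k': "k'\<in>A" and k'': "k''\<in>A" and q: "q\<in>fst k" "q\<in>fst k'" "q\<in>fst k''"
  shows "M k' k'' q (M k k' q v) = M k k'' q v"
proof -
  have D1: "(transition k k' has_derivative M k k' q) (at (snd k q))" using M_der k k' q by blast
  have D2: "(transition k' k'' has_derivative M k' k'' q) (at (transition k k' (snd k q)))"
    using M_der[OF k' k'' q(2,3)] trans_eq[OF k q(1)] by simp
  have D3: "((\<lambda>y. transition k' k'' (transition k k' y)) has_derivative (\<lambda>x. M k' k'' q (M k k' q x))) (at (snd k q))"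
    using has_derivative_compose[OF D1 D2] by simp
  define G where "G = snd k ` (fst k \<inter> fst k' \<inter> fst k'')"
  have oG: "open G" unfolding G_def
    using img_open[OF k] chart_open[OF k] chart_open[OF k'] chart_open[OF k''] by (meson Int_lower1 inf.coboundedI1 open_Int)
  have "(transition k k'' has_derivative (\<lambda>x. M k' k'' q (M k k' q x))) (at (snd k q))"
  proof (rule has_derivative_transform_within_open[OF D3 oG])
    show "snd k q \<in> G" using G_def q by blast
    fix y assume "y \<in> G"
    then obtain p where p: "p\<in>fst k" "p\<in>fst k'" "p\<in>fst k''" "y = snd k p" using G_def by auto
    show "transition k' k'' (transition k k' y) = transition k k'' y"
      using p trans_eq k k' by simp
  qed
  then show ?thesis unfolding M_def using frechet_derivative_at by metis
qed


definition cf where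
  "cf q u \<longleftrightarrow> (\<forall>k\<in>A. \<forall>k'\<in>A. q\<in>fst k \<longrightarrow> q\<in>fst k' \<longrightarrow> (\<forall>v. u k \<bullet> v = u k' \<bullet> M k k' q v))"

definition eqat where
  "eqat q u u' \<longleftrightarrow> (\<forall>k\<in>A. q\<in>fst k \<longrightarrow> u k = u' k)"

definition ext :: "('a,'n) chart \<Rightarrow> 'a \<Rightarrow> real^'n \<Rightarrow> ('a,'n) chart \<Rightarrow> real^'n" where
  "ext k q w = (\<lambda>k'. \<chi> i. w \<bullet> M k' k q (axis i 1))"

definition par_on :: "real set \<Rightarrow> (real \<Rightarrow> 'a) \<Rightarrow> (real \<Rightarrow> ('a,'n) chart \<Rightarrow> real^'n) \<Rightarrow> bool" where
  "par_on Z f \<sigma> \<longleftrightarrow> (\<forall>z\<in>Z. cf (f z) (\<sigma> z)) \<and>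
     (\<forall>k\<in>A. \<forall>z\<in>Z. f z \<in> fst k \<longrightarrow> (\<exists>e>0. \<forall>z'\<in>Z. dist z' z < e \<longrightarrow> \<sigma> z' k = \<sigma> z k))"

lemma eqat_refl: "eqat q u u" by (simp add: eqat_def)
lemma eqat_sym: "eqat q u u' \<Longrightarrow> eqat q u' u" by (simp add: eqat_def)
lemma eqat_trans: "eqat q u u' \<Longrightarrow> eqat q u' u'' \<Longrightarrow> eqat q u u''" by (simp add: eqat_def)

lemma ext_inner:
  assumes "k\<in>A" "k'\<in>A" "q\<in>fst k" "q\<in>fst k'"
  shows "ext k q w k' \<bullet> v = w \<bullet> M k' k q v"
proof -
  have L: "linear (M k' k q)" using M_linear assms by blast
  have "linear (\<lambda>x. w \<bullet> M k' k q x)"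
    by (rule linearI) (simp_all add: linear_add[OF L] linear_scale[OF L] inner_add_right)
  from lin_inner_vec[OF this] show ?thesis by (simp add: ext_def)
qed

lemma ext_self: "k\<in>A \<Longrightarrow> q\<in>fst k \<Longrightarrow> ext k q w k = w"
  by (simp add: ext_def M_id vec_eq_iff inner_axis)

lemma ext_cf: assumes k: "k\<in>A" and q: "q\<in>fst k" shows "cf q (ext k q w)"
  unfolding cf_def
proof (intro ballI impI allI)
  fix k1 k2 v assume k1: "k1\<in>A" and k2: "k2\<in>A" and q1: "q\<in>fst k1" and q2: "q\<in>fst k2"
  show "ext k q w k1 \<bullet> v = ext k q w k2 \<bullet> M k1 k2 q v"
    using ext_inner[OF k k1 q q1] ext_inner[OF k k2 q q2] M_co[OF k1 k2 k q1 q2 q] by simp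
qed

lemma eqat_chart:
  assumes "cf q u" "cf q u'" "k\<in>A" "q\<in>fst k" "u k = u' k"
  shows "eqat q u u'"
  unfolding eqat_def
proof (intro ballI impI)
  fix k' assume "k'\<in>A" "q\<in>fst k'"
  have "u k' \<bullet> v = u' k' \<bullet> v" for v
  proof -
    have "u k' \<bullet> v = u k \<bullet> M k' k q v" using assms(1,3,4) \<open>k'\<in>A\<close> \<open>q\<in>fst k'\<close> unfolding cf_def by blast
    moreover have "u' k' \<bullet> v = u' k \<bullet> M k' k q v" using assms(2,3,4) \<open>k'\<in>A\<close> \<open>q\<in>fst k'\<close> unfolding cf_def by blast
    ultimately show ?thesis using assms(5) by simp
  qed
  then have "\<forall>v. u k' \<bullet> v = u' k' \<bullet> v" by blast
  then show "u k' = u' k'" using vec_eq_inner by blast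
qed

lemma eqat_iff_chart:
  assumes "cf q u" "cf q u'" "k\<in>A" "q\<in>fst k"
  shows "eqat q u u' \<longleftrightarrow> u k = u' k"
  using eqat_chart[OF assms] assms(3,4) eqat_def by blast

lemma cf_ext: assumes "cf q u" "k\<in>A" "q\<in>fst k" shows "eqat q (ext k q (u k)) u"
  using eqat_chart[OF ext_cf[OF assms(2,3)] assms(1) assms(2,3)] ext_self[OF assms(2,3)] by simp

lemma ext_loc:
  assumes "k\<in>A" "k'\<in>A" "q\<in>fst k" "q\<in>fst k'"
  shows "\<exists>N. open N \<and> q\<in>N \<and> N \<subseteq> fst k \<inter> fst k' \<and> (\<forall>q'\<in>N. ext k q' w k' = ext k q w k')"
proof -
  obtain N where N: "open N" "q \<in> N" "N \<subseteq> fst k' \<inter> fst k" "\<forall>q'\<in>N. M k' k q' = M k' k q"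
    using M_const[OF assms(2,1,4,3)] by blast
  have "\<forall>q'\<in>N. ext k q' w k' = ext k q w k'" using N(4) by (simp add: ext_def)
  moreover have "N \<subseteq> fst k \<inter> fst k'" using N(3) by blast
  ultimately show ?thesis using N(1,2) by blast
qed

lemma cont_pt:
  fixes f :: "'b::metric_space \<Rightarrow> 'a"
  assumes "continuous_on S f" "x\<in>S" "open B" "f x \<in> B"
  shows "\<exists>e>0. \<forall>y\<in>S. dist y x < e \<longrightarrow> f y \<in> B"
proof -
  obtain T where T: "open T" "x \<in> T" "\<forall>y\<in>S. y \<in> T \<longrightarrow> f y \<in> B"
    using assms(1)[unfolded continuous_on_topological] assms(2-4) by blast
  then obtain e where e: "e>0" "ball x e \<subseteq> T" using open_contains_ball by blast
  have "f y \<in> B" if "y\<in>S" "dist y x < e" for y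
  proof -
    have "y \<in> ball x e" using that by (simp add: dist_commute)
    then show ?thesis using e T that by blast
  qed
  then show ?thesis using e by blast
qed

lemma par_cong: "(\<And>t. t\<in>Z \<Longrightarrow> f t = g t) \<Longrightarrow> par_on Z f \<sigma> = par_on Z g \<sigma>"
  unfolding par_on_def by simp

lemma PA_unique:
  assumes f: "continuous_on {0..1} f" and \<sigma>: "par_on {0..1} f \<sigma>" and \<tau>: "par_on {0..1} f \<tau>"
    and e0: "eqat (f 0) (\<sigma> 0) (\<tau> 0)" and t: "t\<in>{0..1}"
  shows "eqat (f t) (\<sigma> t) (\<tau> t)"
proof -
  have "(\<lambda>x y. eqat (f x) (\<sigma> x) (\<tau> x) \<longleftrightarrow> eqat (f y) (\<sigma> y) (\<tau> y)) 0 t"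
  proof (rule connected_equivalence_relation[of "{0..1::real}"])
    show "connected {0..1::real}" by simp
    show "(0::real) \<in> {0..1}" by simp
    show "t \<in> {0..1}" by (rule t)
  next
    fix a :: real assume a: "a \<in> {0..1}"
    obtain k where k: "k\<in>A" "f a \<in> fst k" using cover by blast
    obtain e1 where e1: "e1>0" "\<forall>z'\<in>{0..1}. dist z' a < e1 \<longrightarrow> \<sigma> z' k = \<sigma> a k"
      using \<sigma> k a unfolding par_on_def by blast
    obtain e2 where e2: "e2>0" "\<forall>z'\<in>{0..1}. dist z' a < e2 \<longrightarrow> \<tau> z' k = \<tau> a k"
      using \<tau> k a unfolding par_on_def by blast
    obtain e3 where e3: "e3>0" "\<forall>z'\<in>{0..1}. dist z' a < e3 \<longrightarrow> f z' \<in> fst k"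
      using cont_pt[OF f a chart_open[OF k(1)] k(2)] by blast
    define e where "e = min e1 (min e2 e3)"
    have "openin (top_of_set {0..1}) ({0..1} \<inter> ball a e)" by (simp add: openin_open_Int)
    moreover have "a \<in> {0..1} \<inter> ball a e" using a e_def e1 e2 e3 by simp
    moreover have "\<forall>x\<in>{0..1} \<inter> ball a e. (eqat (f a) (\<sigma> a) (\<tau> a) \<longleftrightarrow> eqat (f x) (\<sigma> x) (\<tau> x))"
    proof
      fix x assume x: "x \<in> {0..1} \<inter> ball a e"
      then have d: "dist x a < e1" "dist x a < e2" "dist x a < e3" using e_def by (auto simp: dist_commute)
      have fx: "f x \<in> fst k" using e3 d x by blast
      have cfa: "cf (f a) (\<sigma> a)" "cf (f a) (\<tau> a)" using \<sigma> \<tau> a unfolding par_on_def by auto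
      have cfx: "cf (f x) (\<sigma> x)" "cf (f x) (\<tau> x)" using \<sigma> \<tau> x unfolding par_on_def by auto
      have "eqat (f a) (\<sigma> a) (\<tau> a) \<longleftrightarrow> \<sigma> a k = \<tau> a k"
        by (rule eqat_iff_chart[OF cfa k])
      moreover have "eqat (f x) (\<sigma> x) (\<tau> x) \<longleftrightarrow> \<sigma> x k = \<tau> x k"
        by (rule eqat_iff_chart[OF cfx k(1) fx])
      ultimately show "eqat (f a) (\<sigma> a) (\<tau> a) \<longleftrightarrow> eqat (f x) (\<sigma> x) (\<tau> x)"
        using e1 e2 d x by auto
    qed
    ultimately show "\<exists>T. openin (top_of_set {0..1}) T \<and> a \<in> T \<and>
        (\<forall>x\<in>T. eqat (f a) (\<sigma> a) (\<tau> a) \<longleftrightarrow> eqat (f x) (\<sigma> x) (\<tau> x))" by blast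
  qed auto
  then show ?thesis using e0 by simp
qed

lemma PA_ext:
  assumes f: "continuous_on Z f" and k: "k\<in>A" and fk: "\<forall>z\<in>Z. f z \<in> fst k"
  shows "par_on Z f (\<lambda>z. ext k (f z) w)"
  unfolding par_on_def
proof (intro conjI ballI impI)
  fix z assume "z \<in> Z" then show "cf (f z) (ext k (f z) w)" using ext_cf k fk by blast
next
  fix k' z assume k': "k'\<in>A" and z: "z\<in>Z" and fz: "f z \<in> fst k'"
  obtain N where N: "open N" "f z \<in> N" "\<forall>q'\<in>N. ext k q' w k' = ext k (f z) w k'"
    using ext_loc[OF k k' _ fz] fk z by blast
  obtain e where "e>0" "\<forall>y\<in>Z. dist y z < e \<longrightarrow> f y \<in> N" using cont_pt[OF f z N(1,2)] by blast
  then show "\<exists>e>0. \<forall>z'\<in>Z. dist z' z < e \<longrightarrow> ext k (f z') w k' = ext k (f z) w k'"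
    using N(3) by blast
qed

lemma PA_chart_const:
  assumes f: "continuous_on {0..1} f" and \<sigma>: "par_on {0..1} f \<sigma>" and k: "k\<in>A"
    and fk: "\<forall>t\<in>{0..1}. f t \<in> fst k"
  shows "\<sigma> 1 k = \<sigma> 0 k"
proof -
  have cf0: "cf (f 0) (\<sigma> 0)" using \<sigma> unfolding par_on_def by simp
  have P: "par_on {0..1} f (\<lambda>z. ext k (f z) (\<sigma> 0 k))" by (rule PA_ext[OF f k fk])
  have "eqat (f 0) (\<sigma> 0) (ext k (f 0) (\<sigma> 0 k))"
    using cf_ext[OF cf0 k] fk eqat_sym by simp
  then have "eqat (f 1) (\<sigma> 1) (ext k (f 1) (\<sigma> 0 k))"
    using PA_unique[OF f \<sigma> P] by simp
  then show ?thesis using fk k ext_self unfolding eqat_def by simp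
qed

lemma PA_reparam:
  assumes \<sigma>: "par_on {0..1} f \<sigma>" and g: "\<And>t. t\<in>{0..1} \<Longrightarrow> \<alpha>*t+\<beta> \<in> {0..1::real}"
  shows "par_on {0..1} (\<lambda>t. f (\<alpha>*t+\<beta>)) (\<lambda>t. \<sigma> (\<alpha>*t+\<beta>))"
  unfolding par_on_def
proof (intro conjI ballI impI)
  fix z :: real assume "z\<in>{0..1}" then show "cf (f (\<alpha>*z+\<beta>)) (\<sigma> (\<alpha>*z+\<beta>))" using \<sigma> g unfolding par_on_def by blast
next
  fix k z assume k: "k\<in>A" and z: "z\<in>{0..1::real}" and fz: "f (\<alpha>*z+\<beta>) \<in> fst k"
  obtain e where e: "e>0" "\<forall>z'\<in>{0..1}. dist z' (\<alpha>*z+\<beta>) < e \<longrightarrow> \<sigma> z' k = \<sigma> (\<alpha>*z+\<beta>) k"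
    using \<sigma> k g[OF z] fz unfolding par_on_def by blast
  define e' where "e' = e / (\<bar>\<alpha>\<bar> + 1)"
  have e': "e' > 0" using e e'_def by simp
  have "\<sigma> (\<alpha>*z'+\<beta>) k = \<sigma> (\<alpha>*z+\<beta>) k" if "z'\<in>{0..1}" "dist z' z < e'" for z'
  proof -
    have "dist (\<alpha>*z'+\<beta>) (\<alpha>*z+\<beta>) = \<bar>\<alpha>\<bar> * dist z' z"
      by (simp add: dist_real_def abs_mult[symmetric] algebra_simps)
    also have "\<dots> \<le> \<bar>\<alpha>\<bar> * e'" using that by (simp add: mult_left_mono)
    also have "\<dots> < e" using e e'_def e' by (simp add: field_simps)
    finally show ?thesis using e g that by blast
  qed
  then show "\<exists>e>0. \<forall>z'\<in>{0..1}. dist z' z < e \<longrightarrow> \<sigma> (\<alpha>*z'+\<beta>) k = \<sigma> (\<alpha>*z+\<beta>) k"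
    using e' by blast
qed

lemma A_ne: "A \<noteq> {}" using cover by blast

lemma LB:
  fixes f :: "'b::real_normed_vector \<Rightarrow> 'a"
  assumes S: "compact S" and f: "continuous_on S f"
  shows "\<exists>\<delta>>0. \<forall>x\<in>S. \<exists>k\<in>A. \<forall>y\<in>S. dist y x < \<delta> \<longrightarrow> f y \<in> fst k"
proof -
  define C where "C = {T. open T \<and> (\<exists>k\<in>A. \<forall>y\<in>S\<inter>T. f y \<in> fst k)}"
  have "{} \<in> C" using A_ne C_def by auto
  then have Cne: "C \<noteq> {}" by blast
  have cov: "S \<subseteq> \<Union>C"
  proof
    fix x assume x: "x\<in>S"
    obtain k where k: "k\<in>A" "f x \<in> fst k" using cover by blast
    obtain T where "open T" "x \<in> T" "\<forall>y\<in>S. y \<in> T \<longrightarrow> f y \<in> fst k"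
      using f[unfolded continuous_on_topological] x chart_open[OF k(1)] k(2) by blast
    then show "x \<in> \<Union>C" using C_def k by blast
  qed
  obtain \<delta> where d: "\<delta>>0" "\<And>T. T \<subseteq> S \<Longrightarrow> diameter T < \<delta> \<Longrightarrow> \<exists>B\<in>C. T \<subseteq> B"
  proof -
    have oC: "\<And>B. B \<in> C \<Longrightarrow> open B" using C_def by blast
    show ?thesis using Lebesgue_number_lemma[OF S Cne cov oC] that by blast
  qed
  have "\<exists>k\<in>A. \<forall>y\<in>S. dist y x < \<delta>/3 \<longrightarrow> f y \<in> fst k" if x: "x\<in>S" for x
  proof -
    define T where "T = S \<inter> ball x (\<delta>/3)"
    have "diameter T \<le> 2*\<delta>/3"
    proof (rule diameter_le)
      show "T \<noteq> {} \<or> 0 \<le> 2*\<delta>/3" using d by simp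
      fix y z assume "y\<in>T" "z\<in>T"
      then have "dist x y < \<delta>/3" "dist x z < \<delta>/3" using T_def by auto
      then show "norm (y - z) \<le> 2*\<delta>/3" using dist_triangle[of y z x]
        by (simp add: dist_norm norm_minus_commute)
    qed
    then have "diameter T < \<delta>" using d by simp
    then obtain B where B: "B\<in>C" "T \<subseteq> B" using d(2) T_def by blast
    then obtain k where k: "k\<in>A" "\<forall>y\<in>S\<inter>B. f y \<in> fst k" using C_def by blast
    show ?thesis
    proof (intro bexI[OF _ k(1)] ballI impI)
      fix y assume "y\<in>S" "dist y x < \<delta>/3"
      then have "y \<in> T" using T_def by (simp add: dist_commute)
      then show "f y \<in> fst k" using B k T_def by blast
    qed
  qed
  then show ?thesis using d(1) by (intro exI[of _ "\<delta>/3"]) auto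
qed

end



context AA begin

lemma par_onD: "par_on Z f \<sigma> \<Longrightarrow> k\<in>A \<Longrightarrow> z\<in>Z \<Longrightarrow> f z \<in> fst k \<Longrightarrow>
   \<exists>e>0. \<forall>z'\<in>Z. dist z' z < e \<longrightarrow> \<sigma> z' k = \<sigma> z k"
  unfolding par_on_def by blast

lemma par_on_cf: "par_on Z f \<sigma> \<Longrightarrow> z\<in>Z \<Longrightarrow> cf (f z) (\<sigma> z)"
  unfolding par_on_def by blast

lemma PA_exist:
  assumes f: "continuous_on {0..1} f" and v0: "cf (f 0) v0"
  shows "\<exists>\<sigma>. par_on {0..1} f \<sigma> \<and> eqat (f 0) (\<sigma> 0) v0"
proof -
  obtain \<delta> where d: "\<delta>>0" and dk: "\<forall>x\<in>{0..1}. \<exists>k\<in>A. \<forall>y\<in>{0..1}. dist y x < \<delta> \<longrightarrow> f y \<in> fst k"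
    using LB[OF compact_Icc f] by blast
  have step: "\<exists>\<sigma>. par_on {0..min 1 (real n * \<delta>/2)} f \<sigma> \<and> eqat (f 0) (\<sigma> 0) v0" for n
  proof (induction n)
    case 0
    have "par_on {0..0} f (\<lambda>_. v0)" unfolding par_on_def using v0 by (auto intro: exI[of _ 1])
    then show ?case by (auto simp: eqat_refl)
  next
    case (Suc n)
    define a where "a = min 1 (real n * \<delta>/2)"
    define b where "b = min 1 (real (Suc n) * \<delta>/2)"
    obtain \<sigma> where \<sigma>: "par_on {0..a} f \<sigma>" "eqat (f 0) (\<sigma> 0) v0" using Suc.IH a_def by blast
    have a01: "0 \<le> a" "a \<le> 1" using a_def d by auto
    have ab: "a \<le> b" "b \<le> a + \<delta>/2" "b \<le> 1" using a_def b_def d by (auto simp: algebra_simps min_def)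
    have a1: "a \<in> {0..1}" using a01 by simp
    obtain k where k: "k\<in>A" "\<forall>y\<in>{0..1}. dist y a < \<delta> \<longrightarrow> f y \<in> fst k" using dk a1 by blast
    have fk: "f y \<in> fst k" if "y \<in> {0..b}" "a \<le> y" for y
    proof -
      have "dist y a < \<delta>" using that ab d by (simp add: dist_real_def)
      then show ?thesis using k that ab by auto
    qed
    define \<sigma>' where "\<sigma>' t = (if t \<le> a then \<sigma> t else ext k (f t) (\<sigma> a k))" for t
    have cf\<sigma>: "cf (f z) (\<sigma> z)" if "z \<in> {0..a}" for z using par_on_cf[OF \<sigma>(1) that] .
    have P: "par_on {0..b} f \<sigma>'"
      unfolding par_on_def
    proof (intro conjI ballI impI)
      fix z assume z: "z \<in> {0..b}"
      show "cf (f z) (\<sigma>' z)"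
      proof (cases "z \<le> a")
        case True then show ?thesis using cf\<sigma>[of z] z \<sigma>'_def by auto
      next
        case False then show ?thesis using ext_cf[OF k(1) fk[OF z]] \<sigma>'_def by auto
      qed
    next
      fix k' z assume k': "k'\<in>A" and z: "z\<in>{0..b}" and fz: "f z \<in> fst k'"
      have z1: "z \<in> {0..1}" using z ab by auto
      consider "z < a" | "z > a" | "z = a" by linarith
      then show "\<exists>e>0. \<forall>z'\<in>{0..b}. dist z' z < e \<longrightarrow> \<sigma>' z' k' = \<sigma>' z k'"
      proof cases
        case 1
        have za: "z \<in> {0..a}" using z 1 by auto
        obtain e1 where e1: "e1>0" "\<forall>z'\<in>{0..a}. dist z' z < e1 \<longrightarrow> \<sigma> z' k' = \<sigma> z k'"
          using par_onD[OF \<sigma>(1) k' za fz] by blast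
        show ?thesis
        proof (intro exI[of _ "min e1 (a - z)"] conjI ballI impI)
          show "min e1 (a-z) > 0" using e1 1 by simp
          fix z' assume z': "z' \<in> {0..b}" "dist z' z < min e1 (a-z)"
          then have "z' < a" "z' \<in> {0..a}" "dist z' z < e1" by (auto simp: dist_real_def)
          then show "\<sigma>' z' k' = \<sigma>' z k'" using e1 1 \<sigma>'_def by auto
        qed
      next
        case 2
        have fzk: "f z \<in> fst k" using fk z 2 by auto
        obtain N where N: "open N" "f z \<in> N" "\<forall>q'\<in>N. ext k q' (\<sigma> a k) k' = ext k (f z) (\<sigma> a k) k'"
          using ext_loc[OF k(1) k' fzk fz] by blast
        obtain e2 where e2: "e2>0" "\<forall>y\<in>{0..1}. dist y z < e2 \<longrightarrow> f y \<in> N"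
          using cont_pt[OF f z1 N(1,2)] by blast
        show ?thesis
        proof (intro exI[of _ "min e2 (z - a)"] conjI ballI impI)
          show "min e2 (z-a) > 0" using e2 2 by simp
          fix z' assume z': "z' \<in> {0..b}" "dist z' z < min e2 (z-a)"
          then have "z' > a" "z' \<in> {0..1}" "dist z' z < e2" using ab by (auto simp: dist_real_def)
          then show "\<sigma>' z' k' = \<sigma>' z k'" using e2 N(3) 2 \<sigma>'_def by auto
        qed
      next
        case 3
        have aa: "a \<in> {0..a}" "a \<in> {0..1}" using a01 by auto
        have fak: "f a \<in> fst k" using k(2) aa(2) d by simp
        have fak': "f a \<in> fst k'" using fz 3 by simp
        obtain e1 where e1: "e1>0" "\<forall>z'\<in>{0..a}. dist z' a < e1 \<longrightarrow> \<sigma> z' k' = \<sigma> a k'"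
          using par_onD[OF \<sigma>(1) k' aa(1) fak'] by blast
        obtain N where N: "open N" "f a \<in> N" "\<forall>q'\<in>N. ext k q' (\<sigma> a k) k' = ext k (f a) (\<sigma> a k) k'"
          using ext_loc[OF k(1) k' fak fak'] by blast
        obtain e2 where e2: "e2>0" "\<forall>y\<in>{0..1}. dist y a < e2 \<longrightarrow> f y \<in> N"
          using cont_pt[OF f aa(2) N(1,2)] by blast
        have ea: "ext k (f a) (\<sigma> a k) k' = \<sigma> a k'"
          using cf_ext[OF cf\<sigma>[OF aa(1)] k(1) fak] k' fak' unfolding eqat_def by blast
        show ?thesis
        proof (intro exI[of _ "min e1 e2"] conjI ballI impI)
          show "min e1 e2 > 0" using e1 e2 by simp
          fix z' assume z': "z' \<in> {0..b}" "dist z' z < min e1 e2"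
          show "\<sigma>' z' k' = \<sigma>' z k'"
          proof (cases "z' \<le> a")
            case True
            have za': "z' \<in> {0..a}" using z'(1) True by simp
            have "dist z' a < e1" using z'(2) 3 by simp
            then have "\<sigma> z' k' = \<sigma> a k'" using e1(2) za' by blast
            then show ?thesis using True 3 by (simp add: \<sigma>'_def)
          next
            case False
            have z'1: "z' \<in> {0..1}" using z'(1) ab(3) by simp
            have "dist z' a < e2" using z'(2) 3 by simp
            then have fN: "f z' \<in> N" using e2(2) z'1 by blast
            show ?thesis using N(3)[rule_format, OF fN] ea False 3 by (simp add: \<sigma>'_def)
          qed
        qed
      qed
    qed
    moreover have "eqat (f 0) (\<sigma>' 0) v0" using \<sigma>(2) a01 \<sigma>'_def by simp
    ultimately show ?case using b_def by blast
  qed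
  obtain n :: nat where n: "2/\<delta> < real n" using reals_Archimedean2 by blast
  then have "1 \<le> real n * \<delta> / 2" using d by (simp add: field_simps)
  then have "min 1 (real n * \<delta>/2) = 1" by simp
  then show ?thesis using step[of n] by metis
qed

lemma TR:
  fixes g :: "real \<Rightarrow> 'a"
  assumes g: "continuous_on {0..1} g" and k1: "k1\<in>A" "\<forall>t\<in>{0..1}. g t \<in> fst k1"
    and k2: "k2\<in>A" "\<forall>t\<in>{0..1}. g t \<in> fst k2" and u: "cf (g 0) u"
  shows "eqat (g 1) (ext k1 (g 1) (u k1)) (ext k2 (g 1) (u k2))"
proof -
  have P: "par_on {0..1} g (\<lambda>t. ext k1 (g t) (u k1))" by (rule PA_ext[OF g k1])
  have c0: "g 0 \<in> fst k1" "g 0 \<in> fst k2" "g 1 \<in> fst k1" "g 1 \<in> fst k2" using k1 k2 by auto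
  have "ext k1 (g 1) (u k1) k2 = ext k1 (g 0) (u k1) k2" using PA_chart_const[OF g P k2] by simp
  also have "\<dots> = u k2" using cf_ext[OF u k1(1) c0(1)] k2(1) c0(2) unfolding eqat_def by blast
  also have "\<dots> = ext k2 (g 1) (u k2) k2" using ext_self[OF k2(1) c0(4)] by simp
  finally show ?thesis
    using eqat_chart[OF ext_cf[OF k1(1) c0(3)] ext_cf[OF k2(1) c0(4)] k2(1) c0(4)] by blast
qed

definition Pl :: "(real \<Rightarrow> 'a) \<Rightarrow> bool" where
  "Pl g \<longleftrightarrow> (\<forall>\<sigma>. par_on {0..1} g \<sigma> \<longrightarrow> eqat (g 0) (\<sigma> 1) (\<sigma> 0))"

lemma Pl_cong: fixes f g :: "real \<Rightarrow> 'a" shows "(\<And>t. t\<in>{0..1} \<Longrightarrow> f t = g t) \<Longrightarrow> Pl f = Pl g"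
  unfolding Pl_def using par_cong[of "{0..1}" f g] by simp

lemma Pl_const: "Pl (\<lambda>_. c)"
  unfolding Pl_def
proof (intro allI impI)
  fix \<sigma> assume \<sigma>: "par_on {0..1} (\<lambda>_. c) \<sigma>"
  have P: "par_on {0..1} (\<lambda>_. c) (\<lambda>_. \<sigma> 0)"
    unfolding par_on_def using par_on_cf[OF \<sigma>, of 0] by (auto intro: exI[of _ 1])
  show "eqat c (\<sigma> 1) (\<sigma> 0)" using PA_unique[OF continuous_on_const \<sigma> P] by (simp add: eqat_refl)
qed

end



context AA begin

lemma seg_facts:
  fixes s sp r t t0 :: real
  assumes "s\<in>{0..1}" "sp\<in>{0..1}" "r\<in>{0..1}" "t\<in>{0..1}"
  shows "(sp + r * (s-sp), t) \<in> {0..1} \<times> {0..1}"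
    and "dist (sp + r * (s-sp), t) (s,t0) \<le> \<bar>s-sp\<bar> + \<bar>t-t0\<bar>"
proof -
  have r: "0 \<le> r" "r \<le> 1" using assms by auto
  have a: "(1-r) * sp \<le> (1-r)" "r  *  s \<le> r" using assms r by (simp_all add: mult_left_le)
  have b: "0 \<le> (1-r) * sp" "0 \<le> r  *  s" using assms r by simp_all
  have eq: "sp + r * (s-sp) = (1-r) * sp + r  *  s" by (simp add: algebra_simps)
  show "(sp + r * (s-sp), t) \<in> {0..1} \<times> {0..1}" using a b eq assms by simp
  have "dist (sp + r * (s-sp)) s = (1-r) * \<bar>s-sp\<bar>"
  proof -
    have "sp + r * (s-sp) - s = (1-r) * (sp-s)" by (simp add: algebra_simps)
    then show ?thesis using r by (simp add: dist_real_def abs_mult abs_minus_commute)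
  qed
  also have "\<dots> \<le> \<bar>s-sp\<bar>" using r by (simp add: mult_left_le_one_le)
  finally have d1: "dist (sp + r * (s-sp)) s \<le> \<bar>s-sp\<bar>" .
  have "dist (sp + r * (s-sp), t) (s,t0) = sqrt ((dist (sp + r * (s-sp)) s)\<^sup>2 + (dist t t0)\<^sup>2)"
    by (rule dist_Pair_Pair)
  also have "\<dots> \<le> \<bar>dist (sp + r * (s-sp)) s\<bar> + \<bar>dist t t0\<bar>" by (rule sqrt_sum_squares_le_sum_abs)
  also have "\<dots> \<le> \<bar>s-sp\<bar> + \<bar>t-t0\<bar>" using d1 by (simp add: dist_real_def)
  finally show "dist (sp + r * (s-sp), t) (s,t0) \<le> \<bar>s-sp\<bar> + \<bar>t-t0\<bar>" .
qed

lemma hol_step: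
  fixes h :: "real \<times> real \<Rightarrow> 'a"
  assumes h: "continuous_on ({0..1}\<times>{0..1}) h" and loop: "\<forall>s\<in>{0..1}. h (s,1) = h (s,0)"
    and d: "\<delta>>0" and dk: "\<forall>x\<in>{0..1}\<times>{0..1}. \<exists>k\<in>A. \<forall>y\<in>{0..1}\<times>{0..1}. dist y x < \<delta> \<longrightarrow> h y \<in> fst k"
    and s: "s\<in>{0..1}" "s'\<in>{0..1}" "\<bar>s - s'\<bar> < \<delta>/2"
    and P: "Pl (\<lambda>t. h (s,t))"
  shows "Pl (\<lambda>t. h (s',t))"
  unfolding Pl_def
proof (intro allI impI)
  fix \<sigma>' assume \<sigma>': "par_on {0..1} (\<lambda>t. h (s',t)) \<sigma>'"
  define sq where "sq = {0..1::real}\<times>{0..1::real}"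
  define kk where "kk t = (SOME k. k\<in>A \<and> (\<forall>y\<in>sq. dist y (s,t) < \<delta> \<longrightarrow> h y \<in> fst k))" for t
  have kk: "kk t \<in> A \<and> (\<forall>y\<in>sq. dist y (s,t) < \<delta> \<longrightarrow> h y \<in> fst (kk t))" if "t\<in>{0..1}" for t
  proof -
    have "(s,t) \<in> sq" using s that sq_def by simp
    then have "\<exists>k. k\<in>A \<and> (\<forall>y\<in>sq. dist y (s,t) < \<delta> \<longrightarrow> h y \<in> fst k)" using dk sq_def by blast
    then show ?thesis unfolding kk_def by (rule someI_ex)
  qed
  define sg where "sg t r = (s' + r*(s-s'), t::real)" for t r
  have sg_in: "sg t r \<in> sq" if "t\<in>{0..1}" "r\<in>{0..1}" for t r
    using seg_facts(1)[OF s(1,2) that(2,1)] sg_def sq_def by simp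
  have hc: "continuous_on {0..1} (\<lambda>r. h (sg t r))" if t: "t\<in>{0..1}" for t
  proof (rule continuous_on_compose2[OF h])
    show "continuous_on {0..1} (sg t)" unfolding sg_def by (intro continuous_intros)
    show "sg t ` {0..1} \<subseteq> {0..1} \<times> {0..1}" using sg_in t sq_def by blast
  qed
  have inK: "h (sg t r) \<in> fst k" if "t\<in>{0..1}" "r\<in>{0..1}" "t0\<in>{0..1}" "\<bar>t - t0\<bar> < \<delta>/2"
     "\<forall>y\<in>sq. dist y (s,t0) < \<delta> \<longrightarrow> h y \<in> fst k" for t r t0 k
  proof -
    have "dist (sg t r) (s,t0) \<le> \<bar>s-s'\<bar> + \<bar>t-t0\<bar>" using seg_facts(2)[OF s(1,2) that(2,1)] sg_def by simp
    also have "\<dots> < \<delta>" using s(3) that(4) by simp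
    finally have "dist (sg t r) (s,t0) < \<delta>" .
    then show ?thesis using that(5) sg_in[OF that(1,2)] by blast
  qed
  have hs: "continuous_on {0..1} (\<lambda>t. h (s,t))"
    by (rule continuous_on_compose2[OF h]) (use s in \<open>auto intro!: continuous_intros\<close>)
  define \<tau> where "\<tau> t = ext (kk t) (h (s,t)) (\<sigma>' t (kk t))" for t
  have TRt: "eqat (h (s,t)) (\<tau> t) (ext k (h (s,t)) (\<sigma>' t k))"
    if t: "t\<in>{0..1}" "t0\<in>{0..1}" "\<bar>t-t0\<bar> < \<delta>/2" and k: "k\<in>A" "\<forall>y\<in>sq. dist y (s,t0) < \<delta> \<longrightarrow> h y \<in> fst k"
    for t t0 k
  proof -
    have g0: "h (sg t 0) = h (s',t)" and g1: "h (sg t 1) = h (s,t)" by (simp_all add: sg_def)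
    have k1: "\<forall>r\<in>{0..1}. h (sg t r) \<in> fst (kk t)"
      using inK[of t _ t "kk t"] kk[OF t(1)] t(1) d by simp
    have k2: "\<forall>r\<in>{0..1}. h (sg t r) \<in> fst k" using inK[of t _ t0 k] t k by blast
    have u: "cf (h (sg t 0)) (\<sigma>' t)" using par_on_cf[OF \<sigma>' t(1)] g0 by simp
    have "eqat (h (sg t 1)) (ext (kk t) (h (sg t 1)) (\<sigma>' t (kk t))) (ext k (h (sg t 1)) (\<sigma>' t k))"
      using TR[OF hc[OF t(1)] _ k1 k(1) k2 u] kk[OF t(1)] by blast
    then show ?thesis using g1 \<tau>_def by simp
  qed
  have Pt: "par_on {0..1} (\<lambda>t. h (s,t)) \<tau>"
    unfolding par_on_def
  proof (intro conjI ballI impI)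
    fix t :: real assume t: "t\<in>{0..1}"
    have "(s,t) \<in> sq" using s t sq_def by simp
    then have "h (s,t) \<in> fst (kk t)" using kk[OF t] d by simp
    then show "cf (h (s,t)) (\<tau> t)" using ext_cf kk[OF t] \<tau>_def by simp
  next
    fix k' t assume k': "k'\<in>A" and t: "t\<in>{0..1}" and hk': "h (s,t) \<in> fst k'"
    define k where "k = kk t"
    have kA: "k\<in>A" and kp: "\<forall>y\<in>sq. dist y (s,t) < \<delta> \<longrightarrow> h y \<in> fst k" using kk[OF t] k_def by auto
    have st: "(s,t) \<in> sq" "(s',t) \<in> sq" using s t sq_def by simp_all
    have hsk: "h (s,t) \<in> fst k" using kp st d by simp
    have "\<bar>s' - s\<bar> < \<delta>" using s(3) d abs_minus_commute[of s s'] by linarith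
    then have "dist (s',t) (s,t) < \<delta>" by (simp add: dist_Pair_Pair dist_real_def)
    then have hs'k: "h (s',t) \<in> fst k" using kp st by blast
    obtain e1 where e1: "e1>0" "\<forall>z'\<in>{0..1}. dist z' t < e1 \<longrightarrow> \<sigma>' z' k = \<sigma>' t k"
      using par_onD[OF \<sigma>' kA t] hs'k by blast
    obtain N where N: "open N" "h (s,t) \<in> N" "N \<subseteq> fst k \<inter> fst k'"
        "\<forall>q'\<in>N. ext k q' (\<sigma>' t k) k' = ext k (h (s,t)) (\<sigma>' t k) k'"
      using ext_loc[OF kA k' hsk hk'] by blast
    obtain e2 where e2: "e2>0" "\<forall>y\<in>{0..1}. dist y t < e2 \<longrightarrow> h (s,y) \<in> N"
      using cont_pt[OF hs t N(1)] N(2) by blast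
    show "\<exists>e>0. \<forall>z'\<in>{0..1}. dist z' t < e \<longrightarrow> \<tau> z' k' = \<tau> t k'"
    proof (intro exI[of _ "min (min e1 e2) (\<delta>/2)"] conjI ballI impI)
      show "min (min e1 e2) (\<delta>/2) > 0" using e1 e2 d by simp
      fix z' assume z': "z'\<in>{0..1}" "dist z' t < min (min e1 e2) (\<delta>/2)"
      have dd: "dist z' t < e1" "dist z' t < e2" "\<bar>z' - t\<bar> < \<delta>/2" using z'(2) by (simp_all add: dist_real_def)
      have fN: "h (s,z') \<in> N" using e2(2) z'(1) dd(2) by blast
      have "eqat (h (s,z')) (\<tau> z') (ext k (h (s,z')) (\<sigma>' z' k))" using TRt[OF z'(1) t dd(3) kA kp] .
      moreover have "h (s,z') \<in> fst k'" using fN N(3) by blast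
      ultimately have "\<tau> z' k' = ext k (h (s,z')) (\<sigma>' z' k) k'" using k' unfolding eqat_def by blast
      also have "\<dots> = ext k (h (s,z')) (\<sigma>' t k) k'" using e1(2) z'(1) dd(1) by simp
      also have "\<dots> = ext k (h (s,t)) (\<sigma>' t k) k'" using N(4) fN by blast
      also have "\<dots> = \<tau> t k'" using \<tau>_def k_def by simp
      finally show "\<tau> z' k' = \<tau> t k'" .
    qed
  qed
  have e10: "eqat (h (s,0)) (\<tau> 1) (\<tau> 0)" using P Pt unfolding Pl_def by blast
  define k0 where "k0 = kk 0"
  have k0: "k0\<in>A" "\<forall>y\<in>sq. dist y (s,0) < \<delta> \<longrightarrow> h y \<in> fst k0" using kk[of 0] k0_def by auto
  have one: "(1::real) \<in> {0..1}" and zero: "(0::real) \<in> {0..1}" by simp_all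
  have k1: "\<forall>r\<in>{0..1}. h (sg 1 r) \<in> fst (kk 1)"
    using inK[of 1 _ 1 "kk 1"] kk[OF one] d by simp
  have k2: "\<forall>r\<in>{0..1}. h (sg 1 r) \<in> fst k0"
  proof
    fix r :: real assume r: "r\<in>{0..1}"
    have "fst (sg 0 r) \<in> {0..1}" using sg_in[OF zero r] sq_def by auto
    then have "h (sg 1 r) = h (sg 0 r)" using loop by (simp add: sg_def)
    moreover have "h (sg 0 r) \<in> fst k0" using inK[OF zero r zero _ k0(2)] d by simp
    ultimately show "h (sg 1 r) \<in> fst k0" by simp
  qed
  have u1: "cf (h (sg 1 0)) (\<sigma>' 1)" using par_on_cf[OF \<sigma>' one] by (simp add: sg_def)
  have "eqat (h (sg 1 1)) (ext (kk 1) (h (sg 1 1)) (\<sigma>' 1 (kk 1))) (ext k0 (h (sg 1 1)) (\<sigma>' 1 k0))"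
    using TR[OF hc[OF one] _ k1 k0(1) k2 u1] kk[OF one] by blast
  then have a1: "eqat (h (s,0)) (\<tau> 1) (ext k0 (h (s,0)) (\<sigma>' 1 k0))"
    using loop s(1) by (simp add: sg_def \<tau>_def)
  have a0: "\<tau> 0 = ext k0 (h (s,0)) (\<sigma>' 0 k0)" using \<tau>_def k0_def by simp
  have "eqat (h (s,0)) (ext k0 (h (s,0)) (\<sigma>' 1 k0)) (ext k0 (h (s,0)) (\<sigma>' 0 k0))"
    using a1 e10 a0 eqat_sym eqat_trans by metis
  moreover have hs0: "h (s,0) \<in> fst k0" using k0 s d sq_def by simp
  ultimately have eq0: "\<sigma>' 1 k0 = \<sigma>' 0 k0" using k0(1) ext_self[OF k0(1) hs0] unfolding eqat_def by metis
  have "\<bar>s' - s\<bar> < \<delta>" using s(3) d abs_minus_commute[of s s'] by linarith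
  then have "dist (s',0) (s,0) < \<delta>" by (simp add: dist_Pair_Pair dist_real_def)
  moreover have "(s',0) \<in> sq" using s sq_def by simp
  ultimately have hs'0: "h (s',0) \<in> fst k0" using k0(2) by blast
  have c1: "cf (h (s',0)) (\<sigma>' 1)" using par_on_cf[OF \<sigma>' one] loop s(2) by simp
  have c0: "cf (h (s',0)) (\<sigma>' 0)" using par_on_cf[OF \<sigma>' zero] by simp
  show "eqat ((\<lambda>t. h (s',t)) 0) (\<sigma>' 1) (\<sigma>' 0)"
    using eqat_chart[OF c1 c0 k0(1) hs'0 eq0] by simp
qed

lemma hol:
  fixes h :: "real \<times> real \<Rightarrow> 'a"
  assumes h: "continuous_on ({0..1}\<times>{0..1}) h" and loop: "\<forall>s\<in>{0..1}. h (s,1) = h (s,0)"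
  shows "Pl (\<lambda>t. h (0,t)) \<longleftrightarrow> Pl (\<lambda>t. h (1,t))"
proof -
  obtain \<delta> where d: "\<delta>>0" and dk: "\<forall>x\<in>{0..1}\<times>{0..1}. \<exists>k\<in>A. \<forall>y\<in>{0..1}\<times>{0..1}. dist y x < \<delta> \<longrightarrow> h y \<in> fst k"
    using LB[OF compact_Times[OF compact_Icc compact_Icc] h] by blast
  have "(\<lambda>x y. Pl (\<lambda>t. h (x,t)) \<longleftrightarrow> Pl (\<lambda>t. h (y,t))) 0 1"
  proof (rule connected_equivalence_relation[of "{0..1::real}"])
    fix a :: real assume a: "a \<in> {0..1}"
    have "openin (top_of_set {0..1}) ({0..1} \<inter> ball a (\<delta>/2))" by (simp add: openin_open_Int)
    moreover have "a \<in> {0..1} \<inter> ball a (\<delta>/2)" using a d by simp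
    moreover have "\<forall>x\<in>{0..1} \<inter> ball a (\<delta>/2). (Pl (\<lambda>t. h (a,t)) \<longleftrightarrow> Pl (\<lambda>t. h (x,t)))"
    proof
      fix x assume x: "x \<in> {0..1} \<inter> ball a (\<delta>/2)"
      then have x1: "x \<in> {0..1}" and dx: "\<bar>a - x\<bar> < \<delta>/2" "\<bar>x - a\<bar> < \<delta>/2"
        by (auto simp: dist_real_def abs_minus_commute)
      show "Pl (\<lambda>t. h (a,t)) \<longleftrightarrow> Pl (\<lambda>t. h (x,t))"
        using hol_step[OF h loop d dk a x1 dx(1)] hol_step[OF h loop d dk x1 a dx(2)] by blast
    qed
    ultimately show "\<exists>T. openin (top_of_set {0..1}) T \<and> a \<in> T \<and> (\<forall>x\<in>T. Pl (\<lambda>t. h (a,t)) \<longleftrightarrow> Pl (\<lambda>t. h (x,t)))"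
      by blast
  qed auto
  then show ?thesis by simp
qed

lemma sc_path:
  assumes "simply_connected Ob" "a\<in>Ob" "b\<in>Ob"
  shows "\<exists>g. path g \<and> path_image g \<subseteq> Ob \<and> pathstart g = a \<and> pathfinish g = b"
proof -
  have H: "\<And>p q. path p \<Longrightarrow> pathfinish p = pathstart p \<Longrightarrow> path_image p \<subseteq> Ob \<Longrightarrow>
      path q \<Longrightarrow> pathfinish q = pathstart q \<Longrightarrow> path_image q \<subseteq> Ob \<Longrightarrow> homotopic_loops Ob p q"
    using assms(1) unfolding simply_connected_def by blast
  have pa: "path (\<lambda>_::real. a)" "path (\<lambda>_::real. b)" by (simp_all add: path_def)
  have ia: "path_image (\<lambda>_::real. a) \<subseteq> Ob" "path_image (\<lambda>_::real. b) \<subseteq> Ob"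
    using assms(2,3) by (auto simp: path_image_def)
  have "homotopic_loops Ob (\<lambda>_. a) (\<lambda>_. b)"
    by (rule H[OF pa(1) _ ia(1) pa(2) _ ia(2)]) (simp_all add: pathstart_def pathfinish_def)
  then obtain h where h: "continuous_on ({0..1::real}\<times>{0..1}) h" "h \<in> ({0..1}\<times>{0..1}) \<rightarrow> Ob"
     "\<forall>x\<in>{0..1}. h (0,x) = a" "\<forall>x\<in>{0..1}. h (1,x) = b"
     "\<forall>t\<in>{0..1}. pathfinish (h \<circ> Pair t) = pathstart (h \<circ> Pair t)"
    unfolding homotopic_loops by (elim exE conjE) blast
  define g where "g t = h (t,0)" for t
  have "path g" unfolding path_def g_def
    by (rule continuous_on_compose2[OF h(1)]) (auto intro!: continuous_intros)
  moreover have "path_image g \<subseteq> Ob" using h(2) unfolding path_image_def g_def by auto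
  moreover have "pathstart g = a" "pathfinish g = b" using h(3,4) by (auto simp: g_def pathstart_def pathfinish_def)
  ultimately show ?thesis by blast
qed

end



context AA begin

lemma hl_unpack:
  assumes "homotopic_loops S p q"
  obtains h where "continuous_on ({0..1::real}\<times>{0..1}) h" "h \<in> ({0..1}\<times>{0..1}) \<rightarrow> S"
     "\<forall>x\<in>{0..1}. h (0,x) = p x" "\<forall>x\<in>{0..1}. h (1,x) = q x"
     "\<forall>s\<in>{0..1}. h (s,1) = h (s,0)"
proof -
  obtain h where h: "continuous_on ({0..1::real}\<times>{0..1}) h" "h \<in> ({0..1}\<times>{0..1}) \<rightarrow> S"
     "\<forall>x\<in>{0..1}. h (0,x) = p x" "\<forall>x\<in>{0..1}. h (1,x) = q x"
     "\<forall>t\<in>{0..1}. pathfinish (h \<circ> Pair t) = pathstart (h \<circ> Pair t)"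
    using assms unfolding homotopic_loops by (elim exE conjE) blast
  have "\<forall>s\<in>{0..1}. h (s,1) = h (s,0)" using h(5) by (simp add: pathstart_def pathfinish_def)
  then show ?thesis using h(1-4) that by blast
qed

lemma indep:
  assumes Ob: "simply_connected Ob"
    and g1: "path g1" "path_image g1 \<subseteq> Ob" "pathstart g1 = c" "pathfinish g1 = q"
    and g2: "path g2" "path_image g2 \<subseteq> Ob" "pathstart g2 = c" "pathfinish g2 = q"
    and v0: "cf c v0"
    and s1: "par_on {0..1} g1 \<sigma>1" "eqat c (\<sigma>1 0) v0"
    and s2: "par_on {0..1} g2 \<sigma>2" "eqat c (\<sigma>2 0) v0"
  shows "eqat q (\<sigma>1 1) (\<sigma>2 1)"
proof -
  define L where "L = g1 +++ reversepath g2"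
  have jn: "pathfinish g1 = pathstart (reversepath g2)" using g1 g2 by simp
  have pL: "path L" using jn g1 g2 L_def by simp
  have iL: "path_image L \<subseteq> Ob" using path_image_join[OF jn] g1 g2 L_def by simp
  have lL: "pathfinish L = pathstart L" using g1 g2 L_def by simp
  have cOb: "c \<in> Ob" using g1 pathstart_in_path_image by blast
  have H: "\<And>p q. path p \<Longrightarrow> pathfinish p = pathstart p \<Longrightarrow> path_image p \<subseteq> Ob \<Longrightarrow>
      path q \<Longrightarrow> pathfinish q = pathstart q \<Longrightarrow> path_image q \<subseteq> Ob \<Longrightarrow> homotopic_loops Ob p q"
    using Ob unfolding simply_connected_def by blast
  have pc: "path (\<lambda>_::real. c)" by (simp add: path_def)
  have ic: "path_image (\<lambda>_::real. c) \<subseteq> Ob" using cOb by (auto simp: path_image_def)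
  have "homotopic_loops Ob L (\<lambda>_. c)"
    by (rule H[OF pL lL iL pc _ ic]) (simp add: pathstart_def pathfinish_def)
  then obtain h where h: "continuous_on ({0..1::real}\<times>{0..1}) h"
     "\<forall>x\<in>{0..1}. h (0,x) = L x" "\<forall>x\<in>{0..1}. h (1,x) = c" and loop: "\<forall>s\<in>{0..1}. h (s,1) = h (s,0)"
    by (rule hl_unpack) blast
  have "Pl (\<lambda>t. h (1,t))" using Pl_cong[of "\<lambda>t. h(1,t)" "\<lambda>_. c"] h(3) Pl_const by simp
  then have "Pl (\<lambda>t. h (0,t))" using hol[OF h(1) loop] by simp
  then have PL: "Pl L" using Pl_cong[of "\<lambda>t. h(0,t)" L] h(2) by simp
  have cL: "continuous_on {0..1} L" using pL path_def by blast
  have L0: "L 0 = c" using g1 L_def by (simp add: joinpaths_def pathstart_def)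
  obtain u where u: "par_on {0..1} L u" "eqat (L 0) (u 0) v0" using PA_exist[OF cL] v0 L0 by auto
  have u10: "eqat c (u 1) (u 0)" using PL u(1) L0 unfolding Pl_def by metis
  have u0: "eqat c (u 0) v0" using u(2) L0 by simp
  have cg1: "continuous_on {0..1} g1" using g1 path_def by blast
  have cg2: "continuous_on {0..1} g2" using g2 path_def by blast
  have one: "(1::real) \<in> {0..1}" by simp
  have r1: "par_on {0..1} (\<lambda>t. L ((1/2)*t+0)) (\<lambda>t. u ((1/2)*t+0))"
    by (rule PA_reparam[OF u(1)]) auto
  have r1': "par_on {0..1} g1 (\<lambda>t. u ((1/2)*t+0))"
    using r1 par_cong[of "{0..1}" "\<lambda>t. L ((1/2)*t+0)" g1] by (simp add: L_def joinpaths_def)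
  have "eqat (g1 0) ((\<lambda>t. u ((1/2)*t+0)) 0) (\<sigma>1 0)"
    using eqat_trans[OF u0 eqat_sym[OF s1(2)]] g1(3) by (simp add: pathstart_def)
  then have e1: "eqat q (u (1/2)) (\<sigma>1 1)"
    using PA_unique[OF cg1 r1' s1(1) _ one] g1(4) by (simp add: pathfinish_def)
  have r2: "par_on {0..1} (\<lambda>t. L ((-1/2)*t+1)) (\<lambda>t. u ((-1/2)*t+1))"
    by (rule PA_reparam[OF u(1)]) auto
  have Lg2: "L ((-1/2)*t+1) = g2 t" if "t\<in>{0..1}" for t
  proof (cases "t = 1")
    case True
    then show ?thesis using g1(4) g2(4) by (simp add: L_def joinpaths_def pathfinish_def)
  next
    case False
    then have "t < 1" using that by simp
    then have "\<not> ((-1/2)*t+1 \<le> 1/2)" by simp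
    moreover have "1 - (2 * ((-1/2)*t+1) - 1) = t" by simp
    ultimately show ?thesis by (simp add: L_def joinpaths_def reversepath_def)
  qed
  have r2': "par_on {0..1} g2 (\<lambda>t. u ((-1/2)*t+1))"
    using r2 par_cong[of "{0..1}" "\<lambda>t. L ((-1/2)*t+1)" g2] Lg2 by simp
  have "eqat (g2 0) ((\<lambda>t. u ((-1/2)*t+1)) 0) (\<sigma>2 0)"
    using eqat_trans[OF u10 eqat_trans[OF u0 eqat_sym[OF s2(2)]]] g2(3) by (simp add: pathstart_def)
  then have e2: "eqat q (u (1/2)) (\<sigma>2 1)"
    using PA_unique[OF cg2 r2' s2(1) _ one] g2(4) by (simp add: pathfinish_def)
  show ?thesis using eqat_trans[OF eqat_sym[OF e1] e2] .
qed

lemma par_form_path: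
  assumes \<omega>: "parallel_form A Ob \<omega>" and g: "path g" "path_image g \<subseteq> Ob"
  shows "par_on {0..1} g (\<lambda>t k. \<omega> k (g t))"
  unfolding par_on_def
proof (intro conjI ballI impI)
  fix t :: real assume t: "t\<in>{0..1}"
  then have gt: "g t \<in> Ob" using g unfolding path_image_def by blast
  show "cf (g t) (\<lambda>k. \<omega> k (g t))" unfolding cf_def
    using \<omega> gt unfolding parallel_form_def M_def by blast
next
  fix k t assume k: "k\<in>A" and t: "t\<in>{0..1::real}" and gk: "g t \<in> fst k"
  have gt: "g t \<in> Ob" using g t unfolding path_image_def by blast
  obtain W where W: "open W" "g t \<in> W" "\<forall>q\<in>W \<inter> Ob \<inter> fst k. \<omega> k q = \<omega> k (g t)"
    using \<omega> k gt gk unfolding parallel_form_def by blast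
  have cg: "continuous_on {0..1} g" using g path_def by blast
  obtain e where e: "e>0" "\<forall>y\<in>{0..1}. dist y t < e \<longrightarrow> g y \<in> W \<inter> fst k"
  proof -
    have "open (W \<inter> fst k)" using W(1) chart_open[OF k] by (rule open_Int)
    moreover have "g t \<in> W \<inter> fst k" using W(2) gk by simp
    ultimately show ?thesis using cont_pt[OF cg t] that by blast
  qed
  have "\<omega> k (g z') = \<omega> k (g t)" if "z'\<in>{0..1}" "dist z' t < e" for z'
  proof -
    have "g z' \<in> Ob" using g that(1) unfolding path_image_def by blast
    then show ?thesis using e that W(3) by blast
  qed
  then show "\<exists>e>0. \<forall>z'\<in>{0..1}. dist z' t < e \<longrightarrow> \<omega> k (g z') = \<omega> k (g t)" using e(1) by blast
qed

lemma dF_diff: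
  assumes F: "smooth_fun A F" and k: "k\<in>A" and c: "c\<in>fst k"
  shows "((F \<circ> chart_inv k) has_derivative dF F k c) (at (snd k c))"
proof -
  have "Ck_on (Suc 0) (snd k ` fst k) (F \<circ> chart_inv k)"
    using F k unfolding smooth_fun_def smooth_on_set_def by blast
  then have "(F \<circ> chart_inv k) differentiable_on (snd k ` fst k)" by simp
  then have "(F \<circ> chart_inv k) differentiable at (snd k c)"
    using differentiable_on_eq_differentiable_at[OF chart_img_open[OF k]] c by blast
  then show ?thesis unfolding dF_def using frechet_derivative_works by blast
qed

lemma dF_chain:
  assumes F: "smooth_fun A F" and k: "k\<in>A" and k': "k'\<in>A" and c: "c\<in>fst k" "c\<in>fst k'"
  shows "dF F k c v = dF F k' c (M k k' c v)"
proof -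
  have D1: "(transition k k' has_derivative M k k' c) (at (snd k c))" using M_der k k' c by blast
  have D2: "((F \<circ> chart_inv k') has_derivative dF F k' c) (at (transition k k' (snd k c)))"
    using dF_diff[OF F k' c(2)] trans_eq[OF k c(1)] by simp
  have D3: "((\<lambda>y. (F \<circ> chart_inv k') (transition k k' y)) has_derivative (\<lambda>x. dF F k' c (M k k' c x))) (at (snd k c))"
    using has_derivative_compose[OF D1 D2] by simp
  define G where "G = snd k ` (fst k \<inter> fst k')"
  have oG: "open G" unfolding G_def using img_open[OF k] chart_open[OF k] chart_open[OF k'] by blast
  have "((F \<circ> chart_inv k) has_derivative (\<lambda>x. dF F k' c (M k k' c x))) (at (snd k c))"
  proof (rule has_derivative_transform_within_open[OF D3 oG])
    show "snd k c \<in> G" using G_def c by blast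
    fix y assume "y \<in> G"
    then obtain p where p: "p\<in>fst k" "p\<in>fst k'" "y = snd k p" using G_def by auto
    show "(F \<circ> chart_inv k') (transition k k' y) = (F \<circ> chart_inv k) y"
      using p trans_eq[OF k p(1)] inv_snd[OF k p(1)] inv_snd[OF k' p(2)] by simp
  qed
  then have "dF F k c = (\<lambda>x. dF F k' c (M k k' c x))" unfolding dF_def using frechet_derivative_at by metis
  then show ?thesis by simp
qed

lemma loc_const_conn:
  assumes S: "connected S" and loc: "\<And>a. a\<in>S \<Longrightarrow> \<exists>W. open W \<and> a\<in>W \<and> (\<forall>x\<in>W\<inter>S. g x = g a)"
    and ab: "a\<in>S" "b\<in>S"
  shows "g a = g b"
proof -
  have opI: "\<exists>T. openin (top_of_set S) T \<and> a \<in> T \<and> (\<forall>x\<in>T. g a = g x)" if a: "a\<in>S" for a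
  proof -
    obtain W where W: "open W" "a\<in>W" "\<forall>x\<in>W\<inter>S. g x = g a" using loc[OF a] by blast
    have "openin (top_of_set S) (S \<inter> W)" using W(1) by (simp add: openin_open_Int)
    moreover have "a \<in> S \<inter> W" using W(2) a by simp
    moreover have "\<forall>x\<in>S \<inter> W. g a = g x" using W(3) by (simp add: Int_commute)
    ultimately show ?thesis by blast
  qed
  show ?thesis
    by (rule connected_equivalence_relation[OF S ab, where R="\<lambda>x y. g x = g y"]) (simp_all add: opI)
qed

end



context AA begin

lemma ob_ball:
  assumes k: "k\<in>A" and I: "open I" and p: "p \<in> I" "p \<in> fst k"
  obtains r where "r > 0" "ball (snd k p) r \<subseteq> snd k ` (I \<inter> fst k)"
    "open (fst k \<inter> snd k -` ball (snd k p) r)"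
    "fst k \<inter> snd k -` ball (snd k p) r \<subseteq> I \<inter> fst k"
    "p \<in> fst k \<inter> snd k -` ball (snd k p) r"
    "fst k \<inter> snd k -` ball (snd k p) r = chart_inv k ` ball (snd k p) r"
proof -
  have oG: "open (snd k ` (I \<inter> fst k))" using img_open[OF k] I chart_open[OF k] by blast
  have "snd k p \<in> snd k ` (I \<inter> fst k)" using p by blast
  then obtain r where r: "r>0" "ball (snd k p) r \<subseteq> snd k ` (I \<inter> fst k)" using oG open_contains_ball by blast
  have oW: "open (fst k \<inter> snd k -` ball (snd k p) r)" by (rule pre_open[OF k open_ball])
  have sub: "fst k \<inter> snd k -` ball (snd k p) r \<subseteq> I \<inter> fst k"
  proof
    fix q assume "q \<in> fst k \<inter> snd k -` ball (snd k p) r"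
    then have q: "q \<in> fst k" "snd k q \<in> ball (snd k p) r" by simp_all
    then have "snd k q \<in> snd k ` (I \<inter> fst k)" using r(2) by blast
    then obtain z where z: "z \<in> I" "z \<in> fst k" "snd k q = snd k z" by blast
    have "q = chart_inv k (snd k q)" using inv_snd[OF k q(1)] by simp
    also have "\<dots> = z" using z(3) inv_snd[OF k z(2)] by simp
    finally show "q \<in> I \<inter> fst k" using z by simp
  qed
  have pW: "p \<in> fst k \<inter> snd k -` ball (snd k p) r" using p r(1) by simp
  have eq: "fst k \<inter> snd k -` ball (snd k p) r = chart_inv k ` ball (snd k p) r"
  proof
    show "fst k \<inter> snd k -` ball (snd k p) r \<subseteq> chart_inv k ` ball (snd k p) r"
    proof
      fix q assume "q \<in> fst k \<inter> snd k -` ball (snd k p) r"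
      then have q: "q \<in> fst k" "snd k q \<in> ball (snd k p) r" by simp_all
      have "q = chart_inv k (snd k q)" using inv_snd[OF k q(1)] by simp
      then show "q \<in> chart_inv k ` ball (snd k p) r" using q(2) by blast
    qed
    show "chart_inv k ` ball (snd k p) r \<subseteq> fst k \<inter> snd k -` ball (snd k p) r"
    proof
      fix q assume "q \<in> chart_inv k ` ball (snd k p) r"
      then obtain y where y: "y \<in> ball (snd k p) r" "q = chart_inv k y" by blast
      then have "y \<in> snd k ` fst k" using r(2) by blast
      then have "snd k q = y" "q \<in> fst k" using snd_inv[OF k] y(2) by simp_all
      then show "q \<in> fst k \<inter> snd k -` ball (snd k p) r" using y(1) by simp
    qed
  qed
  show ?thesis by (rule that[OF r oW sub pW eq])
qed

lemma freq_ex1: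
  assumes F: "smooth_fun A F" and Ob: "open Ob" "simply_connected Ob" and c: "c\<in>Ob"
  shows "\<exists>!\<omega>. parallel_form A Ob \<omega> \<and> (\<forall>k\<in>A. c \<in> fst k \<longrightarrow> (\<forall>v. \<omega> k c \<bullet> v = dF F k c v))"
proof -
  define gam where "gam q = (SOME g. path g \<and> path_image g \<subseteq> Ob \<and> pathstart g = c \<and> pathfinish g = q)" for q
  have gam: "path (gam q) \<and> path_image (gam q) \<subseteq> Ob \<and> pathstart (gam q) = c \<and> pathfinish (gam q) = q"
    if "q \<in> Ob" for q
    unfolding gam_def by (rule someI_ex[OF sc_path[OF Ob(2) c that]])
  obtain k0 where k0: "k0\<in>A" "c \<in> fst k0" using cover by blast
  define w0 where "w0 = (\<chi> i. dF F k0 c (axis i 1))"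
  have lin0: "linear (dF F k0 c)" using dF_diff[OF F k0] has_derivative_linear by blast
  define v0 where "v0 = ext k0 c w0"
  have cv0: "cf c v0" unfolding v0_def using ext_cf[OF k0] .
  have v0d: "v0 k \<bullet> v = dF F k c v" if "k\<in>A" "c\<in>fst k" for k v
  proof -
    have "v0 k \<bullet> v = w0 \<bullet> M k k0 c v" unfolding v0_def using ext_inner[OF k0(1) that(1) k0(2) that(2)] .
    also have "\<dots> = dF F k0 c (M k k0 c v)" unfolding w0_def by (rule lin_inner_vec[OF lin0])
    also have "\<dots> = dF F k c v" using dF_chain[OF F that(1) k0(1) that(2) k0(2)] by simp
    finally show ?thesis .
  qed
  define sec where "sec q = (SOME \<sigma>. par_on {0..1} (gam q) \<sigma> \<and> eqat c (\<sigma> 0) v0)" for q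
  have sec: "par_on {0..1} (gam q) (sec q) \<and> eqat c (sec q 0) v0" if q: "q\<in>Ob" for q
  proof -
    have cg: "continuous_on {0..1} (gam q)" using gam[OF q] path_def by blast
    have g0: "gam q 0 = c" using gam[OF q] by (simp add: pathstart_def)
    have "\<exists>\<sigma>. par_on {0..1} (gam q) \<sigma> \<and> eqat c (\<sigma> 0) v0" using PA_exist[OF cg] cv0 g0 by simp
    then show ?thesis unfolding sec_def by (rule someI_ex)
  qed
  have key: "eqat q (\<sigma> 1) (sec q 1)"
    if q: "q\<in>Ob" and g: "path g" "path_image g \<subseteq> Ob" "pathstart g = c" "pathfinish g = q"
      and \<sigma>: "par_on {0..1} g \<sigma>" "eqat c (\<sigma> 0) v0" for q g \<sigma>
    using indep[OF Ob(2) g _ _ _ _ cv0 \<sigma>] gam[OF q] sec[OF q] by blast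
  define \<omega> where "\<omega> k p = (if k\<in>A \<and> p\<in>Ob \<and> p\<in>fst k then sec p 1 k else 0)" for k p
  have one: "(1::real) \<in> {0..1}" by simp
  have PF: "parallel_form A Ob \<omega>"
    unfolding parallel_form_def
  proof (intro conjI)
    show "\<forall>c p. c \<notin> A \<or> p \<notin> Ob \<inter> fst c \<longrightarrow> \<omega> c p = 0" by (auto simp: \<omega>_def)
  next
    show "\<forall>k\<in>A. \<forall>p\<in>Ob \<inter> fst k. \<exists>W. open W \<and> p \<in> W \<and> (\<forall>q\<in>W \<inter> Ob \<inter> fst k. \<omega> k q = \<omega> k p)"
    proof (intro ballI)
      fix k p assume k: "k\<in>A" and p: "p \<in> Ob \<inter> fst k"
      obtain r where r: "r > 0" "ball (snd k p) r \<subseteq> snd k ` (Ob \<inter> fst k)"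
        "open (fst k \<inter> snd k -` ball (snd k p) r)"
        "p \<in> fst k \<inter> snd k -` ball (snd k p) r"
        by (rule ob_ball[OF k Ob(1)]) (use p in auto)
      define W where "W = fst k \<inter> snd k -` ball (snd k p) r"
      have "\<omega> k q = \<omega> k p" if qW: "q \<in> W \<inter> Ob \<inter> fst k" for q
      proof -
        define y0 where "y0 = snd k p"
        define y1 where "y1 = snd k q"
        have y1: "y1 \<in> ball y0 r" using qW W_def y0_def y1_def by auto
        have y0: "y0 \<in> ball y0 r" using r y0_def by simp
        have seg: "linepath y0 y1 t \<in> ball y0 r" if "t\<in>{0..1}" for t
        proof -
          have "linepath y0 y1 t \<in> closed_segment y0 y1"
            using that linepath_image_01 by blast
          moreover have "closed_segment y0 y1 \<subseteq> ball y0 r"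
            by (rule closed_segment_subset[OF y0 y1 convex_ball])
          ultimately show ?thesis by blast
        qed
        have inv_in: "chart_inv k y \<in> Ob \<inter> fst k \<and> snd k (chart_inv k y) = y" if yb: "y \<in> ball y0 r" for y
        proof -
          have "y \<in> snd k ` (Ob \<inter> fst k)" using r(2) yb y0_def by blast
          then obtain z where z: "z \<in> Ob" "z \<in> fst k" "y = snd k z" by blast
          then show ?thesis using inv_snd[OF k z(2)] by simp
        qed
        define \<delta> where "\<delta> t = chart_inv k (linepath y0 y1 t)" for t
        have cinv: "continuous_on (snd k ` fst k) (chart_inv k)"
          using chart_hom[OF k] homeomorphism_def by blast
        have pd: "path \<delta>" unfolding path_def \<delta>_def
        proof (rule continuous_on_compose2[OF cinv])
          show "continuous_on {0..1} (linepath y0 y1)" by (simp add: continuous_on_linepath)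
          show "linepath y0 y1 ` {0..1} \<subseteq> snd k ` fst k" using seg r(2) y0_def by blast
        qed
        have id: "\<delta> t \<in> Ob \<inter> fst k" if "t\<in>{0..1}" for t using inv_in[OF seg[OF that]] \<delta>_def by simp
        have d0: "\<delta> 0 = p" using \<delta>_def y0_def inv_snd[OF k] p by (simp add: linepath_def)
        have d1: "\<delta> 1 = q" using \<delta>_def y1_def inv_snd[OF k] qW by (simp add: linepath_def)
        have ip: "path_image \<delta> \<subseteq> Ob" using id unfolding path_image_def by blast
        have pOb: "p \<in> Ob" "q \<in> Ob" using p qW by auto
        note gp = gam[OF pOb(1)]
        define g' where "g' = gam p +++ \<delta>"
        have jn: "pathfinish (gam p) = pathstart \<delta>" using gp d0 by (simp add: pathstart_def)
        have pg': "path g'" using jn gp pd g'_def by simp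
        have ig': "path_image g' \<subseteq> Ob" using path_image_join[OF jn] gp ip g'_def by simp
        have sg': "pathstart g' = c" using gp g'_def by simp
        have fg': "pathfinish g' = q" using d1 g'_def by (simp add: pathfinish_def joinpaths_def)
        have g'0: "g' 0 = c" using sg' by (simp add: pathstart_def)
        have cg': "continuous_on {0..1} g'" using pg' path_def by blast
        obtain u where u: "par_on {0..1} g' u" "eqat c (u 0) v0" using PA_exist[OF cg'] cv0 g'0 by auto
        have r1: "par_on {0..1} (\<lambda>t. g' ((1/2)*t+0)) (\<lambda>t. u ((1/2)*t+0))"
          by (rule PA_reparam[OF u(1)]) auto
        have r1': "par_on {0..1} (gam p) (\<lambda>t. u ((1/2)*t+0))"
          using r1 par_cong[of "{0..1}" "\<lambda>t. g' ((1/2)*t+0)" "gam p"] by (simp add: g'_def joinpaths_def)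
        have e1: "eqat p (u (1/2)) (sec p 1)"
          using key[OF pOb(1) _ _ _ _ r1'] gp u(2) by simp
        have r2: "par_on {0..1} (\<lambda>t. g' ((1/2)*t+1/2)) (\<lambda>t. u ((1/2)*t+1/2))"
          by (rule PA_reparam[OF u(1)]) auto
        have g'd: "g' ((1/2)*t+1/2) = \<delta> t" if "t\<in>{0..1}" for t
        proof (cases "t = 0")
          case True
          then show ?thesis using gp d0 by (simp add: g'_def joinpaths_def pathfinish_def)
        next
          case False
          then have "t > 0" using that by simp
          then show ?thesis by (simp add: g'_def joinpaths_def)
        qed
        have r2': "par_on {0..1} \<delta> (\<lambda>t. u ((1/2)*t+1/2))"
          using r2 par_cong[of "{0..1}" "\<lambda>t. g' ((1/2)*t+1/2)" \<delta>] g'd by simp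
        have "(\<lambda>t. u ((1/2)*t+1/2)) 1 k = (\<lambda>t. u ((1/2)*t+1/2)) 0 k"
          by (rule PA_chart_const[OF _ r2' k]) (use pd path_def id in auto)
        then have e2: "u 1 k = u (1/2) k" by simp
        have e3: "eqat q (u 1) (sec q 1)" using key[OF pOb(2) pg' ig' sg' fg' u] .
        have "\<omega> k q = sec q 1 k" using \<omega>_def k qW by simp
        also have "\<dots> = u 1 k" using e3 k qW unfolding eqat_def by simp
        also have "\<dots> = u (1/2) k" by (rule e2)
        also have "\<dots> = sec p 1 k" using e1 k p unfolding eqat_def by simp
        also have "\<dots> = \<omega> k p" using \<omega>_def k p by simp
        finally show ?thesis .
      qed
      then show "\<exists>W. open W \<and> p \<in> W \<and> (\<forall>q\<in>W \<inter> Ob \<inter> fst k. \<omega> k q = \<omega> k p)"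
        using r(3,4) W_def by blast
    qed
  next
    show "\<forall>k\<in>A. \<forall>k'\<in>A. \<forall>p\<in>Ob \<inter> fst k \<inter> fst k'. \<forall>v.
        \<omega> k p \<bullet> v = \<omega> k' p \<bullet> frechet_derivative (transition k k') (at (snd k p)) v"
    proof (intro ballI allI)
      fix k k' p v assume k: "k\<in>A" and k': "k'\<in>A" and p: "p \<in> Ob \<inter> fst k \<inter> fst k'"
      have pOb: "p \<in> Ob" using p by simp
      have "cf (gam p 1) (sec p 1)" using par_on_cf[OF _ one] sec[OF pOb] by blast
      moreover have "gam p 1 = p" using gam[OF pOb] by (simp add: pathfinish_def)
      ultimately have "cf p (sec p 1)" by simp
      then have "sec p 1 k \<bullet> v = sec p 1 k' \<bullet> M k k' p v" using k k' p unfolding cf_def by blast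
      moreover have "\<omega> k p = sec p 1 k" "\<omega> k' p = sec p 1 k'" using k k' p by (simp_all add: \<omega>_def)
      ultimately show "\<omega> k p \<bullet> v = \<omega> k' p \<bullet> frechet_derivative (transition k k') (at (snd k p)) v"
        by (simp add: M_def)
    qed
  qed
  have VAL: "\<forall>k\<in>A. c \<in> fst k \<longrightarrow> (\<forall>v. \<omega> k c \<bullet> v = dF F k c v)"
  proof (intro ballI impI allI)
    fix k v assume k: "k\<in>A" and ck: "c\<in>fst k"
    have pc: "path (\<lambda>_::real. c)" by (simp add: path_def)
    have ic: "path_image (\<lambda>_::real. c) \<subseteq> Ob" using c by (auto simp: path_image_def)
    have P: "par_on {0..1} (\<lambda>_. c) (\<lambda>_. v0)" unfolding par_on_def using cv0 by (auto intro: exI[of _ 1])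
    have "eqat c v0 (sec c 1)"
      using key[OF c pc ic _ _ P] by (simp add: pathstart_def pathfinish_def eqat_refl)
    then have "\<omega> k c = v0 k" using k ck c \<omega>_def unfolding eqat_def by simp
    then show "\<omega> k c \<bullet> v = dF F k c v" using v0d[OF k ck] by simp
  qed
  have UNI: "\<omega>1 = \<omega>2" if 1: "parallel_form A Ob \<omega>1" "\<forall>k\<in>A. c \<in> fst k \<longrightarrow> (\<forall>v. \<omega>1 k c \<bullet> v = dF F k c v)"
     and 2: "parallel_form A Ob \<omega>2" "\<forall>k\<in>A. c \<in> fst k \<longrightarrow> (\<forall>v. \<omega>2 k c \<bullet> v = dF F k c v)" for \<omega>1 \<omega>2
  proof (intro ext)
    fix k p
    show "\<omega>1 k p = \<omega>2 k p"
    proof (cases "k\<in>A \<and> p\<in>Ob \<inter> fst k")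
      case False
      have "\<omega>1 k p = 0" using 1(1) False unfolding parallel_form_def by blast
      moreover have "\<omega>2 k p = 0" using 2(1) False unfolding parallel_form_def by blast
      ultimately show ?thesis by simp
    next
      case True
      then have k: "k\<in>A" and pOb: "p\<in>Ob" and pk: "p\<in>fst k" by auto
      note gp = gam[OF pOb]
      have cg: "continuous_on {0..1} (gam p)" using gp path_def by blast
      have P1: "par_on {0..1} (gam p) (\<lambda>t k. \<omega>1 k (gam p t))" using par_form_path[OF 1(1)] gp by blast
      have P2: "par_on {0..1} (gam p) (\<lambda>t k. \<omega>2 k (gam p t))" using par_form_path[OF 2(1)] gp by blast
      have g0: "gam p 0 = c" using gp by (simp add: pathstart_def)
      have g1: "gam p 1 = p" using gp by (simp add: pathfinish_def)
      have "eqat c (\<lambda>k. \<omega>1 k c) (\<lambda>k. \<omega>2 k c)"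
        unfolding eqat_def
      proof (intro ballI impI)
        fix k' assume "k'\<in>A" "c\<in>fst k'"
        then have "\<forall>v. \<omega>1 k' c \<bullet> v = \<omega>2 k' c \<bullet> v" using 1(2) 2(2) by simp
        then show "\<omega>1 k' c = \<omega>2 k' c" using vec_eq_inner by blast
      qed
      then have "eqat (gam p 1) (\<omega>1' 1) (\<omega>2' 1)" if "\<omega>1' = (\<lambda>t k. \<omega>1 k (gam p t))" "\<omega>2' = (\<lambda>t k. \<omega>2 k (gam p t))" for \<omega>1' \<omega>2'
        using PA_unique[OF cg P1 P2 _ one] g0 that by simp
      then have "eqat p (\<lambda>k. \<omega>1 k p) (\<lambda>k. \<omega>2 k p)" using g1 by simp
      then show ?thesis using k pk unfolding eqat_def by simp
    qed
  qed
  show ?thesis using PF VAL UNI by blast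
qed

lemma freq_props:
  assumes F: "smooth_fun A F" and Ob: "open Ob" "simply_connected Ob" and c: "c\<in>Ob"
  shows "parallel_form A Ob (freq_map A F Ob c) \<and>
         (\<forall>k\<in>A. c \<in> fst k \<longrightarrow> (\<forall>v. freq_map A F Ob c k c \<bullet> v = dF F k c v))"
  unfolding freq_map_def by (rule theI'[OF freq_ex1[OF F Ob c]])

end



lemma pf_compat: "parallel_form A Ob \<omega> \<Longrightarrow> c\<in>A \<Longrightarrow> c'\<in>A \<Longrightarrow> p\<in>Ob \<Longrightarrow> p\<in>fst c \<Longrightarrow> p\<in>fst c' \<Longrightarrow>
   \<omega> c p \<bullet> v = \<omega> c' p \<bullet> frechet_derivative (transition c c') (at (snd c p)) v"
  unfolding parallel_form_def by blast

lemma pf_loc: "parallel_form A Ob \<omega> \<Longrightarrow> c\<in>A \<Longrightarrow> p\<in>Ob \<Longrightarrow> p\<in>fst c \<Longrightarrow>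
   \<exists>W. open W \<and> p \<in> W \<and> (\<forall>q\<in>W \<inter> Ob \<inter> fst c. \<omega> c q = \<omega> c p)"
  unfolding parallel_form_def by blast

lemma pvf_compat: "parallel_vf A Ob X \<Longrightarrow> c\<in>A \<Longrightarrow> c'\<in>A \<Longrightarrow> p\<in>Ob \<Longrightarrow> p\<in>fst c \<Longrightarrow> p\<in>fst c' \<Longrightarrow>
   X c' p = frechet_derivative (transition c c') (at (snd c p)) (X c p)"
  unfolding parallel_vf_def by blast

lemma pvf_loc: "parallel_vf A Ob X \<Longrightarrow> c\<in>A \<Longrightarrow> p\<in>Ob \<Longrightarrow> p\<in>fst c \<Longrightarrow>
   \<exists>W. open W \<and> p \<in> W \<and> (\<forall>q\<in>W \<inter> Ob \<inter> fst c. X c q = X c p)"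
  unfolding parallel_vf_def by blast

lemma russD: "russmann A F \<Longrightarrow> open Ob \<Longrightarrow> simply_connected Ob \<Longrightarrow> parallel_vf A Ob X \<Longrightarrow>
   nonvanishing_vf A Ob X \<Longrightarrow> open U \<Longrightarrow> U \<noteq> {} \<Longrightarrow> U \<subseteq> Ob \<Longrightarrow>
   (\<forall>c\<in>U. form_vf_zero A Ob (freq_map A F Ob c) X) \<Longrightarrow> False"
  unfolding russmann_def by blast

lemma resD: "resonant_empty_interior A F \<Longrightarrow> open Ob \<Longrightarrow> parallel_vf A Ob X \<Longrightarrow>
   nonvanishing_vf A Ob X \<Longrightarrow> interior (Sigma_X A F Ob X) = {}"
  unfolding resonant_empty_interior_def by blast

theorem mainTheorem6:
  fixes A :: "('a::{t2_space, second_countable_topology}, 'n::finite) chart set"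
    and F :: "'a \<Rightarrow> real"
  assumes "affine_atlas A"
    and "smooth_fun A F"
  shows "russmann A F \<longleftrightarrow> resonant_empty_interior A F"
proof -
  interpret AA A by (rule AA.intro) (rule assms(1))
  show ?thesis
  proof
    assume R: "russmann A F"
    show "resonant_empty_interior A F"
      unfolding resonant_empty_interior_def
    proof (intro allI impI)
      fix Ob X assume H: "open Ob \<and> parallel_vf A Ob X \<and> nonvanishing_vf A Ob X"
      show "interior (Sigma_X A F Ob X) = {}"
      proof (rule ccontr)
        assume "interior (Sigma_X A F Ob X) \<noteq> {}"
        then obtain p where pI: "p \<in> interior (Sigma_X A F Ob X)" by blast
        define I where "I = interior (Sigma_X A F Ob X)"
        have oI: "open I" by (simp add: I_def)
        have IS: "I \<subseteq> Sigma_X A F Ob X" using interior_subset I_def by blast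
        have SOb: "Sigma_X A F Ob X \<subseteq> Ob" unfolding Sigma_X_def by blast
        obtain k where k: "k\<in>A" "p\<in>fst k" using cover by blast
        have pI': "p \<in> I" using pI I_def by simp
        obtain r where r: "r>0" "ball (snd k p) r \<subseteq> snd k ` (I \<inter> fst k)"
          "open (fst k \<inter> snd k -` ball (snd k p) r)"
          "fst k \<inter> snd k -` ball (snd k p) r \<subseteq> I \<inter> fst k"
          "p \<in> fst k \<inter> snd k -` ball (snd k p) r"
          "fst k \<inter> snd k -` ball (snd k p) r = chart_inv k ` ball (snd k p) r"
          by (rule ob_ball[OF k(1) oI pI' k(2)])
        define Ob' where "Ob' = fst k \<inter> snd k -` ball (snd k p) r"
        have oOb': "open Ob'" and sub: "Ob' \<subseteq> I \<inter> fst k" and pOb': "p \<in> Ob'"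
          and eqO: "Ob' = chart_inv k ` ball (snd k p) r" using r Ob'_def by simp_all
        have sub2: "Ob' \<subseteq> Ob" using sub IS SOb by blast
        have hom: "homeomorphism (ball (snd k p) r) Ob' (chart_inv k) (snd k)"
        proof (rule homeomorphism_of_subsets[OF homeomorphism_symD[OF chart_hom[OF k(1)]]])
          show "ball (snd k p) r \<subseteq> snd k ` fst k" using r(2) by blast
          show "Ob' \<subseteq> fst k" using sub by blast
          show "chart_inv k ` ball (snd k p) r = Ob'" using eqO by simp
        qed
        have "ball (snd k p) r homeomorphic Ob'" using hom homeomorphic_def by blast
        then have scOb': "simply_connected Ob'"
          using homeomorphic_simply_connected convex_imp_simply_connected[OF convex_ball] by blast
        have "continuous_on (ball (snd k p) r) (chart_inv k)" using hom homeomorphism_def by blast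
        then have connOb': "connected Ob'" using connected_continuous_image[OF _ connected_ball] eqO by simp
        have pvf0: "parallel_vf A Ob X" and nvf0: "nonvanishing_vf A Ob X" using H by simp_all
        have pvf: "parallel_vf A Ob' X"
          unfolding parallel_vf_def
        proof (intro conjI ballI)
          fix c p assume c: "c\<in>A" and p: "p \<in> Ob' \<inter> fst c"
          then have "p \<in> Ob \<inter> fst c" using sub2 by blast
          then obtain W where W: "open W" "p\<in>W" "\<forall>q\<in>W \<inter> Ob \<inter> fst c. X c q = X c p"
            using pvf_loc[OF pvf0 c] by blast
          then show "\<exists>W. open W \<and> p \<in> W \<and> (\<forall>q\<in>W \<inter> Ob' \<inter> fst c. X c q = X c p)" using sub2 by blast
        next
          fix c c' p assume c: "c\<in>A" "c'\<in>A" and p: "p \<in> Ob' \<inter> fst c \<inter> fst c'"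
          then have "p \<in> Ob \<inter> fst c \<inter> fst c'" using sub2 by blast
          then show "X c' p = frechet_derivative (transition c c') (at (snd c p)) (X c p)"
            using pvf_compat[OF pvf0 c] by blast
        qed
        have nvf: "nonvanishing_vf A Ob' X" using nvf0 sub2 unfolding nonvanishing_vf_def by blast
        have FZ: "\<forall>c\<in>Ob'. form_vf_zero A Ob' (freq_map A F Ob' c) X"
        proof
          fix c assume c: "c\<in>Ob'"
          define \<omega> where "\<omega> = freq_map A F Ob' c"
          have \<omega>p: "parallel_form A Ob' \<omega>" "\<forall>k\<in>A. c\<in>fst k \<longrightarrow> (\<forall>v. \<omega> k c \<bullet> v = dF F k c v)"
            using freq_props[OF assms(2) oOb' scOb' c] \<omega>_def by auto
          have ck: "c \<in> fst k" using c sub by blast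
          have cS: "c \<in> Sigma_X A F Ob X" using c sub IS by blast
          have "form_vf_zero A Ob' \<omega> X"
            unfolding form_vf_zero_def
          proof (intro ballI)
            fix k' q assume k': "k'\<in>A" and q: "q\<in>Ob' \<inter> fst k'"
            have qk: "q \<in> fst k" using q sub by blast
            have qO: "q \<in> Ob'" using q by simp
            have "\<omega> k' q \<bullet> X k' q = \<omega> k q \<bullet> frechet_derivative (transition k' k) (at (snd k' q)) (X k' q)"
              using pf_compat[OF \<omega>p(1) k' k(1) qO _ qk] q by blast
            also have "frechet_derivative (transition k' k) (at (snd k' q)) (X k' q) = X k q"
              using pvf_compat[OF pvf k' k(1) qO _ qk] q by simp
            also have "\<omega> k q = \<omega> k c"
            proof (rule loc_const_conn[OF connOb' _ qO c, where g="\<lambda>x. \<omega> k x"])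
              fix a assume a: "a \<in> Ob'"
              then have "a \<in> Ob' \<inter> fst k" using sub by blast
              then obtain W where W: "open W" "a\<in>W" "\<forall>x\<in>W \<inter> Ob' \<inter> fst k. \<omega> k x = \<omega> k a"
                using pf_loc[OF \<omega>p(1) k(1)] by blast
              then show "\<exists>W. open W \<and> a \<in> W \<and> (\<forall>x\<in>W \<inter> Ob'. \<omega> k x = \<omega> k a)" using sub by blast
            qed
            also have "X k q = X k c"
            proof (rule loc_const_conn[OF connOb' _ qO c, where g="\<lambda>x. X k x"])
              fix a assume a: "a \<in> Ob'"
              then have "a \<in> Ob' \<inter> fst k" using sub by blast
              then obtain W where W: "open W" "a\<in>W" "\<forall>x\<in>W \<inter> Ob' \<inter> fst k. X k x = X k a"
                using pvf_loc[OF pvf k(1)] by blast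
              then show "\<exists>W. open W \<and> a \<in> W \<and> (\<forall>x\<in>W \<inter> Ob'. X k x = X k a)" using sub by blast
            qed
            also have "\<omega> k c \<bullet> X k c = dF F k c (X k c)" using \<omega>p(2) k(1) ck by blast
            also have "\<dots> = Omega_X F X k c" by (simp add: Omega_X_def)
            also have "\<dots> = 0" using cS k(1) ck unfolding Sigma_X_def by blast
            finally show "\<omega> k' q \<bullet> X k' q = 0" .
          qed
          then show "form_vf_zero A Ob' (freq_map A F Ob' c) X" using \<omega>_def by simp
        qed
        have ne: "Ob' \<noteq> {}" using pOb' by blast
        show False by (rule russD[OF R oOb' scOb' pvf nvf oOb' ne subset_refl FZ])
      qed
    qed
  next
    assume R: "resonant_empty_interior A F"
    show "russmann A F" unfolding russmann_def
    proof (intro allI impI notI)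
      fix Ob X assume H: "open Ob \<and> simply_connected Ob \<and> parallel_vf A Ob X \<and> nonvanishing_vf A Ob X"
      assume "\<exists>U. open U \<and> U \<noteq> {} \<and> U \<subseteq> Ob \<and> (\<forall>c\<in>U. form_vf_zero A Ob (freq_map A F Ob c) X)"
      then obtain U where U: "open U" "U \<noteq> {}" "U \<subseteq> Ob" "\<forall>c\<in>U. form_vf_zero A Ob (freq_map A F Ob c) X"
        by blast
      have oOb: "open Ob" and scOb: "simply_connected Ob" using H by simp_all
      have "U \<subseteq> Sigma_X A F Ob X"
      proof
        fix c assume c: "c\<in>U"
        have cOb: "c \<in> Ob" using c U(3) by blast
        have \<omega>p: "\<forall>k\<in>A. c\<in>fst k \<longrightarrow> (\<forall>v. freq_map A F Ob c k c \<bullet> v = dF F k c v)"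
          using freq_props[OF assms(2) oOb scOb cOb] by blast
        have fz: "form_vf_zero A Ob (freq_map A F Ob c) X" using U(4) c by blast
        have "Omega_X F X k c = 0" if k: "k\<in>A" "c\<in>fst k" for k
        proof -
          have "Omega_X F X k c = dF F k c (X k c)" by (simp add: Omega_X_def)
          also have "\<dots> = freq_map A F Ob c k c \<bullet> X k c" using \<omega>p k by simp
          also have "\<dots> = 0" using fz k cOb unfolding form_vf_zero_def by blast
          finally show ?thesis .
        qed
        then show "c \<in> Sigma_X A F Ob X" unfolding Sigma_X_def using cOb by blast
      qed
      then have "U \<subseteq> interior (Sigma_X A F Ob X)" using U(1) interior_maximal by blast
      then have "interior (Sigma_X A F Ob X) \<noteq> {}" using U(2) by blast
      moreover have "interior (Sigma_X A F Ob X) = {}" using resD[OF R] H by blast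
      ultimately show False by simp
    qed
  qed
qed


end
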